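(* Let $0<a<b<1$ with $a+b=1$, let $m\in C^1([0,1])$ be non-constant and $c\in C([0,1])$, and assume (H1), (H2) and $m\in S_{\mathcal{D}}$. Then $\lim_{s\to+\infty}\lambda(s)=\lambda^{\mathcal{D}}$.
   Context: Fix an integer $d\ge1$. $\lambda(s)$ denotes the principal eigenvalue of $-\varphi''-\frac{d-1}{r}\varphi'-2s\,m'(r)\varphi'+c(r)\varphi=\lambda\varphi$ on $(0,1)$, $\varphi'(0)=\varphi'(1)=0$; equivalently $\lambda(s)=\min\{\int_0^1 r^{d-1}e^{2sm}(|\varphi'|^2+c\varphi^2)dr:\ \varphi\in H^1((0,1)),\ \int_0^1 r^{d-1}e^{2sm}\varphi^2dr=1\}$. $\lambda^{\mathcal{D}}$ (resp. $\lambda^{\mathcal{N}}$) is the principal eigenvalue of $-\varphi''-\frac{d-1}{r}\varphi'+c\varphi=\lambda\varphi$ on $(a,b)$ with Dirichlet (resp. Neumann) boundary conditions, i.e. the minimum of $\int_a^b r^{d-1}(|\varphi'|^2+c\varphi^2)dr$ over $\varphi\in H^1_0((a,b))$ (resp. $H^1((a,b))$) with $\int_a^b r^{d-1}\varphi^2dr=1$. (H1): $m(r)=m(1-r)$ on $[0,1]$ and $m\equiv0$ on $[a,b]$, where $a+b=1$. (H2): $c>0$ on $[0,1]$ and $c(r)>\lambda^{\mathcal{D}}$ for $r\in[0,a]\cup[b,1]$. Step function $\tilde m$: given $\delta\in(0,a)$, constants $0<h<\alpha<\beta<1<\nu$ and $l\in\mathbb{N}$ with $\sum_{i\ge1}(\alpha^{i+l}+\beta^{i+l})=a-\delta$,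 put $x_0=\delta$, $x_n=\delta+\sum_{i=1}^n(\alpha^{i+l}+\beta^{i+l})$ ($n\ge1$), $y_n=x_n+\alpha^{n+l+1}$ ($n\ge0$); define $\tilde m(r)=-h^n$ on $[x_n,y_n)$ and $\tilde m(r)=\nu h^n$ on $[y_n,x_{n+1})$ for $n\ge0$ (so on $[\delta,a)$), and $\tilde m(r)=\tilde m(1-r)$ for $r\in[b,1-\delta]$. $S_{\mathcal{D}}$: the set of $m\in C^1([0,1])$ such that, for some such $\delta,h,\alpha,\beta,\nu,l$, $m'$ changes sign only finitely many times in $[0,\delta)\cup(1-\delta,1]$ and $m(r)\ge\tilde m(r)$ for all $r\in[\delta,a]\cup[b,1-\delta]$. *)

theory Defs
  imports "HOL-Analysis.Analysis"
begin

text \<open>H^1((p,q)) pairs: phi is (the continuous representative of) an H^1 function and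
  dphi is its weak derivative, i.e. dphi is in L^2(p,q) and phi(x) = phi(p) + int_p^x dphi.\<close>
definition H1_pair :: "real \<Rightarrow> real \<Rightarrow> (real \<Rightarrow> real) \<Rightarrow> (real \<Rightarrow> real) \<Rightarrow> bool" where
  "H1_pair p q phi dphi \<longleftrightarrow>
     set_integrable lborel {p..q} dphi \<and>
     set_integrable lborel {p..q} (\<lambda>x. (dphi x)\<^sup>2) \<and>
     (\<forall>x\<in>{p..q}. phi x = phi p + (LBINT t:{p..x}. dphi t))"

definition H10_pair :: "real \<Rightarrow> real \<Rightarrow> (real \<Rightarrow> real) \<Rightarrow> (real \<Rightarrow> real) \<Rightarrow> bool" where
  "H10_pair p q phi dphi \<longleftrightarrow> H1_pair p q phi dphi \<and> phi p = 0 \<and> phi q = 0"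

definition lambda_s :: "nat \<Rightarrow> (real \<Rightarrow> real) \<Rightarrow> (real \<Rightarrow> real) \<Rightarrow> real \<Rightarrow> real" where
  "lambda_s d m c s = Inf {(LBINT r:{0..1}. r ^ (d - 1) * exp (2 * s * m r) * ((dphi r)\<^sup>2 + c r * (phi r)\<^sup>2))
       | phi dphi. H1_pair 0 1 phi dphi \<and>
           (LBINT r:{0..1}. r ^ (d - 1) * exp (2 * s * m r) * (phi r)\<^sup>2) = 1}"

definition lambda_D :: "nat \<Rightarrow> (real \<Rightarrow> real) \<Rightarrow> real \<Rightarrow> real \<Rightarrow> real" where
  "lambda_D d c a b = Inf {(LBINT r:{a..b}. r ^ (d - 1) * ((dphi r)\<^sup>2 + c r * (phi r)\<^sup>2))
       | phi dphi. H10_pair a b phi dphi \<and> (LBINT r:{a..b}. r ^ (d - 1) * (phi r)\<^sup>2) = 1}"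

definition lambda_N :: "nat \<Rightarrow> (real \<Rightarrow> real) \<Rightarrow> real \<Rightarrow> real \<Rightarrow> real" where
  "lambda_N d c a b = Inf {(LBINT r:{a..b}. r ^ (d - 1) * ((dphi r)\<^sup>2 + c r * (phi r)\<^sup>2))
       | phi dphi. H1_pair a b phi dphi \<and> (LBINT r:{a..b}. r ^ (d - 1) * (phi r)\<^sup>2) = 1}"

definition C1_deriv_on :: "real set \<Rightarrow> (real \<Rightarrow> real) \<Rightarrow> (real \<Rightarrow> real) \<Rightarrow> bool" where
  "C1_deriv_on S m m' \<longleftrightarrow> continuous_on S m' \<and>
     (\<forall>x\<in>S. (m has_real_derivative m' x) (at x within S))"

definition C1_on :: "real set \<Rightarrow> (real \<Rightarrow> real) \<Rightarrow> bool" where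
  "C1_on S m \<longleftrightarrow> (\<exists>m'. C1_deriv_on S m m')"

definition finitely_many_sign_changes :: "(real \<Rightarrow> real) \<Rightarrow> real set \<Rightarrow> real \<Rightarrow> real \<Rightarrow> bool" where
  "finitely_many_sign_changes f S p q \<longleftrightarrow>
     (\<exists>ts. ts \<noteq> [] \<and> sorted ts \<and> hd ts = p \<and> last ts = q \<and>
        (\<forall>i < length ts - 1.
           (\<forall>x \<in> {ts ! i .. ts ! Suc i} \<inter> S. 0 \<le> f x) \<or>
           (\<forall>x \<in> {ts ! i .. ts ! Suc i} \<inter> S. f x \<le> 0)))"

definition x_pt :: "real \<Rightarrow> real \<Rightarrow> real \<Rightarrow> nat \<Rightarrow> nat \<Rightarrow> real" where
  "x_pt \<delta> \<alpha> \<beta> l n = \<delta> + (\<Sum>i=1..n. \<alpha> ^ (i + l) + \<beta> ^ (i + l))"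

definition y_pt :: "real \<Rightarrow> real \<Rightarrow> real \<Rightarrow> nat \<Rightarrow> nat \<Rightarrow> real" where
  "y_pt \<delta> \<alpha> \<beta> l n = x_pt \<delta> \<alpha> \<beta> l n + \<alpha> ^ (n + l + 1)"

text \<open>Step function on [\<delta>,a) (the intervals [x_n,y_n), [y_n,x_{n+1}) are pairwise disjoint).\<close>
definition tilde_m_left :: "real \<Rightarrow> real \<Rightarrow> real \<Rightarrow> real \<Rightarrow> real \<Rightarrow> nat \<Rightarrow> real \<Rightarrow> real" where
  "tilde_m_left \<delta> h \<alpha> \<beta> \<nu> l r =
     (if \<exists>n. x_pt \<delta> \<alpha> \<beta> l n \<le> r \<and> r < y_pt \<delta> \<alpha> \<beta> l n
      then - (h ^ (SOME n. x_pt \<delta> \<alpha> \<beta> l n \<le> r \<and> r < y_pt \<delta> \<alpha> \<beta> l n))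
      else if \<exists>n. y_pt \<delta> \<alpha> \<beta> l n \<le> r \<and> r < x_pt \<delta> \<alpha> \<beta> l (Suc n)
      then \<nu> * h ^ (SOME n. y_pt \<delta> \<alpha> \<beta> l n \<le> r \<and> r < x_pt \<delta> \<alpha> \<beta> l (Suc n))
      else 0)"

definition tilde_m :: "real \<Rightarrow> real \<Rightarrow> real \<Rightarrow> real \<Rightarrow> real \<Rightarrow> nat \<Rightarrow> real \<Rightarrow> real" where
  "tilde_m \<delta> h \<alpha> \<beta> \<nu> l r =
     (if r < 1/2 then tilde_m_left \<delta> h \<alpha> \<beta> \<nu> l r else tilde_m_left \<delta> h \<alpha> \<beta> \<nu> l (1 - r))"

definition S_D :: "real \<Rightarrow> real \<Rightarrow> (real \<Rightarrow> real) set" where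
  "S_D a b = {m. \<exists>m'. C1_deriv_on {0..1} m m' \<and>
      (\<exists>\<delta> h \<alpha> \<beta> \<nu> (l::nat).
         0 < \<delta> \<and> \<delta> < a \<and> 0 < h \<and> h < \<alpha> \<and> \<alpha> < \<beta> \<and> \<beta> < 1 \<and> 1 < \<nu> \<and>
         (\<lambda>i. \<alpha> ^ (Suc i + l) + \<beta> ^ (Suc i + l)) sums (a - \<delta>) \<and>
         finitely_many_sign_changes m' {0..<\<delta>} 0 \<delta> \<and>
         finitely_many_sign_changes m' {1 - \<delta><..1} (1 - \<delta>) 1 \<and>
         (\<forall>r \<in> {\<delta>..<a} \<union> {b<..1 - \<delta>}. m r \<ge> tilde_m \<delta> h \<alpha> \<beta> \<nu> l r))}"

end

theory Submission
  imports Defs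
begin

locale seqs =
  fixes \<delta> \<alpha> \<beta> :: real and l :: nat and a :: real
  assumes \<alpha>pos: "0 < \<alpha>" and \<alpha>\<beta>: "\<alpha> < \<beta>" and \<beta>1: "\<beta> < 1"
    and sums: "(\<lambda>i. \<alpha> ^ (Suc i + l) + \<beta> ^ (Suc i + l)) sums (a - \<delta>)"
begin

abbreviation "x \<equiv> x_pt \<delta> \<alpha> \<beta> l"
abbreviation "y \<equiv> y_pt \<delta> \<alpha> \<beta> l"

lemma x_0: "x 0 = \<delta>" by (simp add: x_pt_def)

lemma x_Suc: "x (Suc n) = x n + \<alpha> ^ (Suc n + l) + \<beta> ^ (Suc n + l)"
  by (simp add: x_pt_def)

lemma x_lt_y: "x n < y n"
  using \<alpha>pos by (simp add: y_pt_def)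

lemma y_lt_x: "y n < x (Suc n)"
  using \<alpha>pos \<alpha>\<beta> by (simp add: y_pt_def x_Suc)

lemma x_eq_y: "x (Suc n) = y n + \<beta> ^ (Suc n + l)"
  by (simp add: y_pt_def x_Suc)

lemma x_mono_Suc: "x n < x (Suc n)"
  using x_lt_y y_lt_x less_trans by blast

lemma x_mono: "n \<le> k \<Longrightarrow> x n \<le> x k"
  by (induction k rule: dec_induct) (auto intro: order_trans less_imp_le x_mono_Suc)

lemma y_mono: "n \<le> k \<Longrightarrow> y n \<le> y k"
proof (induction k rule: dec_induct)
  case (step k)
  then show ?case using x_lt_y[of "Suc k"] y_lt_x[of k] by linarith
qed simp

lemma y_lt_x_gen: "n < k \<Longrightarrow> y n < x k"
  using y_lt_x[of n] x_mono[of "Suc n" k] by simp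

lemma x_lt_y_gen: "n \<le> k \<Longrightarrow> x n < y k"
  using x_mono[of n k] x_lt_y[of k] by simp

lemma x_ge_delta: "\<delta> \<le> x n"
  using x_mono[of 0 n] by (simp add: x_0)

lemma tail: "(\<lambda>i. \<alpha> ^ (Suc (i + n) + l) + \<beta> ^ (Suc (i + n) + l)) sums (a - x n)"
proof -
  have "(\<lambda>i. \<alpha> ^ (Suc (i + n) + l) + \<beta> ^ (Suc (i + n) + l)) sums
     (a - \<delta> - (\<Sum>i<n. \<alpha> ^ (Suc i + l) + \<beta> ^ (Suc i + l)))"
    using sums_split_initial_segment[OF sums, of n] by simp
  moreover have "(\<Sum>i<n. \<alpha> ^ (Suc i + l) + \<beta> ^ (Suc i + l)) = x n - \<delta>"
    unfolding x_pt_def by (simp add: sum.atLeast1_atMost_eq)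
  ultimately show ?thesis by simp
qed

lemma x_lt_a: "x n < a"
proof -
  have "0 < (\<Sum>i. \<alpha> ^ (Suc (i + n) + l) + \<beta> ^ (Suc (i + n) + l))"
    using \<alpha>pos \<alpha>\<beta> tail[of n]
    by (intro suminf_pos) (auto simp: sums_iff intro!: add_pos_pos)
  then show ?thesis using tail[of n] by (simp add: sums_iff)
qed

lemma y_lt_a: "y n < a"
  using y_lt_x[of n] x_lt_a[of "Suc n"] by simp

lemma a_minus_x: "a - x n \<le> 2 * \<beta> ^ (Suc n + l) / (1 - \<beta>)"
proof -
  have g: "(\<lambda>i. 2 * \<beta> ^ (Suc n + l) * \<beta> ^ i) sums (2 * \<beta> ^ (Suc n + l) * (1 / (1 - \<beta>)))"
    using \<beta>1 \<alpha>pos \<alpha>\<beta> by (intro sums_mult geometric_sums) auto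
  have "\<alpha> ^ (Suc (i + n) + l) + \<beta> ^ (Suc (i + n) + l) \<le> 2 * \<beta> ^ (Suc n + l) * \<beta> ^ i" for i
  proof -
    have A: "\<alpha> ^ (Suc (i + n) + l) \<le> \<beta> ^ (Suc (i + n) + l)"
      using \<alpha>pos \<alpha>\<beta> by (intro power_mono) auto
    have B: "2 * \<beta> ^ (Suc n + l) * \<beta> ^ i = 2 * \<beta> ^ (Suc (i + n) + l)"
      by (simp add: power_add[symmetric] algebra_simps)
    show ?thesis using A B by linarith
  qed
  then have "a - x n \<le> 2 * \<beta> ^ (Suc n + l) * (1 / (1 - \<beta>))"
    using sums_le[OF _ tail g] by blast
  then show ?thesis by simp
qed

lemma a_minus_y: "a - y n \<le> 2 * \<beta> ^ (Suc n + l) / (1 - \<beta>)"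
  using a_minus_x[of n] x_lt_y[of n] by simp

end

context seqs begin

lemma tml_pos:
  assumes "y k \<le> r" "r < x (Suc k)"
  shows "tilde_m_left \<delta> h \<alpha> \<beta> \<nu> l r = \<nu> * h ^ k"
proof -
  have n1: "\<not> (x n \<le> r \<and> r < y n)" for n
  proof (cases "n \<le> k")
    case True then show ?thesis using y_mono[OF True] assms by auto
  next
    case False then have "Suc k \<le> n" by simp
    then show ?thesis using x_mono[of "Suc k" n] assms by auto
  qed
  have n2: "y n \<le> r \<and> r < x (Suc n) \<longleftrightarrow> n = k" for n
  proof (cases "n < k")
    case True then show ?thesis using y_lt_x_gen[of n k] x_mono[of "Suc n" k] assms
      by (smt (verit) Suc_leI x_lt_y)
  next
    case False
    show ?thesis
    proof (cases "n = k")
      case True then show ?thesis using assms by simp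
    next
      case False2: False
      with False have "Suc k \<le> n" by simp
      then show ?thesis using y_mono[of "Suc k" n] x_lt_y[of "Suc k"] assms False2 by auto
    qed
  qed
  have "(SOME n. y n \<le> r \<and> r < x (Suc n)) = k"
    using n2 by simp
  then show ?thesis unfolding tilde_m_left_def using n1 n2 by auto
qed

lemma tml_lower:
  assumes "y k \<le> r" "0 < h" "h < 1" "0 \<le> \<nu>"
  shows "tilde_m_left \<delta> h \<alpha> \<beta> \<nu> l r \<ge> - (h ^ Suc k)"
proof -
  have big: "Suc k \<le> n" if "x n \<le> r \<and> r < y n" for n
  proof (rule ccontr)
    assume "\<not> Suc k \<le> n" then have "n \<le> k" by simp
    then show False using y_mono[of n k] assms that by auto
  qed
  show ?thesis
  proof (cases "\<exists>n. x n \<le> r \<and> r < y n")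
    case True
    define n where "n = (SOME n. x n \<le> r \<and> r < y n)"
    have "x n \<le> r \<and> r < y n" unfolding n_def using True by (rule someI_ex)
    then have "Suc k \<le> n" by (rule big)
    then have "h ^ n \<le> h ^ Suc k" using assms by (intro power_decreasing) auto
    then show ?thesis unfolding tilde_m_left_def using True n_def by simp
  next
    case False
    have "0 \<le> \<nu> * h ^ n" for n using assms by simp
    then show ?thesis unfolding tilde_m_left_def using False assms
      by (auto intro: order_trans[of _ 0])
  qed
qed

end

lemma H1_int_sub:
  assumes "H1_pair p q phi dphi" "p \<le> x" "y \<le> q"
  shows "set_integrable lborel {x..y} dphi" "set_integrable lborel {x..y} (\<lambda>t. (dphi t)\<^sup>2)"
proof -
  have s: "{x..y} \<subseteq> {p..q}" using assms by auto
  have "set_integrable lborel {p..q} dphi" "set_integrable lborel {p..q} (\<lambda>t. (dphi t)\<^sup>2)"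
    using assms(1) unfolding H1_pair_def by blast+
  then show "set_integrable lborel {x..y} dphi" "set_integrable lborel {x..y} (\<lambda>t. (dphi t)\<^sup>2)"
    using set_integrable_subset[OF _ _ s, of lborel] by auto
qed

lemma H1_diff:
  assumes H: "H1_pair p q phi dphi" and xy: "p \<le> x" "x \<le> y" "y \<le> q"
  shows "phi y - phi x = (LBINT t:{x..y}. dphi t)"
proof -
  have ipy: "set_integrable lborel {p..y} dphi" using H1_int_sub[OF H, of p y] xy by simp
  have ipx: "set_integrable lborel {p..x} dphi" using H1_int_sub[OF H, of p x] xy by simp
  have ixy: "set_integrable lborel {x..y} dphi" using H1_int_sub[OF H, of x y] xy by simp
  have eq: "\<forall>z\<in>{p..q}. phi z = phi p + (LBINT t:{p..z}. dphi t)"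
    using H unfolding H1_pair_def by blast
  have "phi y = phi p + (LBINT t:{p..y}. dphi t)" "phi x = phi p + (LBINT t:{p..x}. dphi t)"
    using bspec[OF eq, of y] bspec[OF eq, of x] xy by auto
  moreover have "(LBINT t:{p..y}. dphi t) = integral {p..y} dphi"
    "(LBINT t:{p..x}. dphi t) = integral {p..x} dphi"
    "(LBINT t:{x..y}. dphi t) = integral {x..y} dphi"
    using set_borel_integral_eq_integral(2)[OF ipy] set_borel_integral_eq_integral(2)[OF ipx]
      set_borel_integral_eq_integral(2)[OF ixy] by auto
  moreover have "integral {p..x} dphi + integral {x..y} dphi = integral {p..y} dphi"
    using Henstock_Kurzweil_Integration.integral_combine[OF xy(1,2) set_borel_integral_eq_integral(1)[OF ipy]] .
  ultimately show ?thesis by simp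
qed

lemma H1_cont:
  assumes H: "H1_pair p q phi dphi"
  shows "continuous_on {p..q} phi"
proof (cases "p \<le> q")
  case True
  have ipq: "set_integrable lborel {p..q} dphi" using H unfolding H1_pair_def by (rule conjunct1)
  have cont: "continuous_on {p..q} (\<lambda>x. phi p + integral {p..x} dphi)"
    by (rule continuous_on_add[OF continuous_on_const indefinite_integral_continuous_1[OF set_borel_integral_eq_integral(1)[OF ipq]]])
  have eqx: "phi x = phi p + integral {p..x} dphi" if "x \<in> {p..q}" for x
  proof -
    have "set_integrable lborel {p..x} dphi" using H1_int_sub[OF H, of p x] that by simp
    moreover have "phi x = phi p + (LBINT t:{p..x}. dphi t)"
      using H unfolding H1_pair_def using bspec[OF _ that] by (elim conjE) blast
    ultimately show ?thesis using set_borel_integral_eq_integral(2) by metis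
  qed
  show ?thesis
    using continuous_on_cong[of "{p..q}" "{p..q}" phi "\<lambda>x. phi p + integral {p..x} dphi", OF refl eqx] cont
    by (rule iffD2)
next
  case False then show ?thesis by simp
qed

lemma H1_restrict:
  assumes H: "H1_pair p q phi dphi" and "p \<le> x" "x \<le> y" "y \<le> q"
  shows "H1_pair x y phi dphi"
  unfolding H1_pair_def
proof (intro conjI ballI)
  show "set_integrable lborel {x..y} dphi" "set_integrable lborel {x..y} (\<lambda>t. (dphi t)\<^sup>2)"
    using H1_int_sub[OF H, of x y] assms by auto
  fix z assume "z \<in> {x..y}"
  then have "phi z - phi x = (LBINT t:{x..z}. dphi t)" using H1_diff[OF H, of x z] assms by auto
  then show "phi z = phi x + (LBINT t:{x..z}. dphi t)" by simp
qed

lemma set_integral_const_Icc: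
  "x \<le> y \<Longrightarrow> (LBINT t:{x..y}. (k::real)) = (y - x) * k"
  by (simp add: set_integral_const)

lemma set_integrable_const_Icc:
  "set_integrable lborel {x..y} (\<lambda>t::real. (k::real))"
  by (rule borel_integrable_atLeastAtMost') (rule continuous_on_const)

lemma abs_amgm: "0 < (\<tau>::real) \<Longrightarrow> \<bar>u\<bar> \<le> (\<tau> * u\<^sup>2 + 1 / \<tau>) / 2"
proof -
  assume t: "0 < \<tau>"
  have "0 \<le> (\<tau> * \<bar>u\<bar> - 1)\<^sup>2" by simp
  then have "2 * \<tau> * \<bar>u\<bar> \<le> \<tau>\<^sup>2 * u\<^sup>2 + 1" by (simp add: power2_eq_square algebra_simps)
  then have "2 * \<tau> * \<bar>u\<bar> / \<tau> \<le> (\<tau>\<^sup>2 * u\<^sup>2 + 1) / \<tau>" using t by (intro divide_right_mono) auto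
  then show ?thesis using t by (simp add: field_simps power2_eq_square)
qed

lemma real_CS_aux:
  fixes X L I :: real
  assumes "0 \<le> X" "0 \<le> L" "0 \<le> I" "\<And>\<tau>. 0 < \<tau> \<Longrightarrow> X \<le> (\<tau> * I + L / \<tau>) / 2"
  shows "X\<^sup>2 \<le> L * I"
proof (cases "X = 0")
  case True then show ?thesis using assms by simp
next
  case False
  then have X: "0 < X" using assms by simp
  show ?thesis
  proof (cases "L = 0")
    case True
    have "X \<le> (X / (I + 1) * I + L / (X / (I + 1))) / 2" using assms(4)[of "X / (I+1)"] X assms by simp
    then have "X \<le> X * (I / (I + 1)) / 2" using True by simp
    moreover have "I / (I + 1) \<le> 1" using assms by simp
    moreover have "X * (I / (I + 1)) \<le> X" using mult_left_le[OF \<open>I / (I + 1) \<le> 1\<close>, of X] X by simp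
    moreover have "X * (I / (I + 1)) / 2 \<le> X / 2" by (rule divide_right_mono[OF calculation(3)]) simp
    ultimately have "X \<le> X / 2" by linarith
    then show ?thesis using X by simp
  next
    case False
    then have L: "0 < L" using assms by simp
    have "X \<le> (L / X * I + L / (L / X)) / 2" using assms(4)[of "L / X"] X L by simp
    then have "X \<le> (L * I / X + X) / 2" using X L by simp
    then have "X \<le> L * I / X" by simp
    then have "X * X \<le> L * I / X * X" using X by (intro mult_right_mono) auto
    then show ?thesis using X by (simp add: power2_eq_square)
  qed
qed

lemma set_int_nonneg:
  "(\<And>x. x \<in> A \<Longrightarrow> 0 \<le> f x) \<Longrightarrow> 0 \<le> (LBINT x:A. (f x :: real))"
  unfolding set_lebesgue_integral_def
  by (intro integral_nonneg_AE) (auto simp: indicator_def)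

lemma set_integral_abs_le:
  assumes "set_integrable lborel A (f :: real \<Rightarrow> real)"
  shows "\<bar>LBINT t:A. f t\<bar> \<le> (LBINT t:A. \<bar>f t\<bar>)"
proof -
  have i: "set_integrable lborel A (\<lambda>t. \<bar>f t\<bar>)" using assms by (rule set_integrable_abs)
  have "(LBINT t:A. f t) \<le> (LBINT t:A. \<bar>f t\<bar>)" by (rule set_integral_mono[OF assms i]) simp
  moreover have "(LBINT t:A. - f t) \<le> (LBINT t:A. \<bar>f t\<bar>)"
  proof (rule set_integral_mono[OF _ i])
    show "set_integrable lborel A (\<lambda>t. - f t)" using set_integrable_mult_right[of "-1" lborel A f] assms by simp
  qed simp
  ultimately show ?thesis using set_integral_uminus[OF assms] by linarith
qed

lemma int_CS:
  fixes f :: "real \<Rightarrow> real"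
  assumes f: "set_integrable lborel {x..y} f" and f2: "set_integrable lborel {x..y} (\<lambda>t. (f t)\<^sup>2)"
    and xy: "x \<le> y"
  shows "(LBINT t:{x..y}. f t)\<^sup>2 \<le> (y - x) * (LBINT t:{x..y}. (f t)\<^sup>2)"
proof -
  let ?X = "\<bar>LBINT t:{x..y}. f t\<bar>"
  let ?I = "LBINT t:{x..y}. (f t)\<^sup>2"
  have I0: "0 \<le> ?I" by (intro set_int_nonneg) auto
  have "?X\<^sup>2 \<le> (y - x) * ?I"
  proof (rule real_CS_aux)
    fix \<tau> :: real assume t: "0 < \<tau>"
    have "?X \<le> (LBINT t:{x..y}. \<bar>f t\<bar>)" by (rule set_integral_abs_le[OF f])
    also have "\<dots> \<le> (LBINT t:{x..y}. (\<tau> * (f t)\<^sup>2 + 1 / \<tau>) / 2)"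
    proof (rule set_integral_mono)
      show "set_integrable lborel {x..y} (\<lambda>t. \<bar>f t\<bar>)" using f by (rule set_integrable_abs)
      show "set_integrable lborel {x..y} (\<lambda>t. (\<tau> * (f t)\<^sup>2 + 1 / \<tau>) / 2)"
        by (intro set_integrable_divide set_integral_add(1) set_integrable_mult_right f2 set_integrable_const_Icc)
      show "\<bar>f t\<bar> \<le> (\<tau> * (f t)\<^sup>2 + 1 / \<tau>) / 2" for t using abs_amgm[OF t] .
    qed
    also have "\<dots> = (LBINT t:{x..y}. \<tau> * (f t)\<^sup>2 + 1 / \<tau>) / 2"
      by (rule set_integral_divide_zero)
    also have "(LBINT t:{x..y}. \<tau> * (f t)\<^sup>2 + 1 / \<tau>) =
        (LBINT t:{x..y}. \<tau> * (f t)\<^sup>2) + (LBINT t:{x..y}. 1 / \<tau>)"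
      by (rule set_integral_add(2)[OF set_integrable_mult_right[OF f2] set_integrable_const_Icc])
    also have "\<dots> = \<tau> * ?I + (y - x) * (1 / \<tau>)"
      by (simp only: set_integral_mult_right set_integral_const_Icc[OF xy])
    also have "(\<tau> * ?I + (y - x) * (1 / \<tau>)) / 2 = (\<tau> * ?I + (y - x) / \<tau>) / 2" by simp
    finally show "?X \<le> (\<tau> * ?I + (y - x) / \<tau>) / 2" .
  qed (use xy I0 in auto)
  then show ?thesis by simp
qed


lemma set_int_subset_le:
  fixes g :: "real \<Rightarrow> real"
  assumes g: "set_integrable lborel A g" and BA: "B \<subseteq> A" and B: "B \<in> sets lborel"
    and nn: "\<And>x. x \<in> A \<Longrightarrow> 0 \<le> g x"
  shows "(LBINT x:B. g x) \<le> (LBINT x:A. g x)"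
proof -
  have gB: "set_integrable lborel B g" by (rule set_integrable_subset[OF g B BA])
  show ?thesis unfolding set_lebesgue_integral_def
    using gB g unfolding set_integrable_def
    by (intro integral_mono) (use BA nn in \<open>auto simp: indicator_def\<close>)
qed

lemma sq_sum_le: "((x::real) + y)\<^sup>2 \<le> 2 * x\<^sup>2 + 2 * y\<^sup>2"
proof -
  have "(x + y)\<^sup>2 = 2 * x\<^sup>2 + 2 * y\<^sup>2 - (x - y)\<^sup>2" by (simp add: power2_eq_square algebra_simps)
  moreover have "0 \<le> (x - y)\<^sup>2" by simp
  ultimately show ?thesis by linarith
qed

lemma key_est:
  fixes phi dphi rho :: "real \<Rightarrow> real"
  assumes H: "H1_pair 0 1 phi dphi"
    and pq: "0 \<le> p" "p \<le> p1" "p1 < p2" "p2 \<le> q" "q \<le> 1" and e: "p \<le> e" "e \<le> q"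
    and W1: "0 < W1" "\<forall>r\<in>{p..q}. W1 \<le> rho r"
    and W2: "0 < W2" "\<forall>r\<in>{p1..p2}. W2 \<le> rho r"
    and rho_nn: "\<forall>r\<in>{0..1}. 0 \<le> rho r"
    and i1: "set_integrable lborel {0..1} (\<lambda>r. rho r * (phi r)\<^sup>2)"
    and n1: "(LBINT r:{0..1}. rho r * (phi r)\<^sup>2) \<le> 1"
    and i2: "set_integrable lborel {0..1} (\<lambda>r. rho r * (dphi r)\<^sup>2)"
    and n2: "(LBINT r:{0..1}. rho r * (dphi r)\<^sup>2) \<le> M"
  shows "(phi e)\<^sup>2 \<le> 4 / (W2 * (p2 - p1)) + 2 * (q - p) * M / W1"
proof -
  define T where "T = 2 / (W2 * (p2 - p1))"
  have T0: "0 < T" unfolding T_def using W2 pq by simp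
  obtain r where r: "r \<in> {p1..p2}" "(phi r)\<^sup>2 \<le> T"
  proof (rule ccontr)
    assume "\<not> thesis"
    then have big: "\<forall>r\<in>{p1..p2}. T < (phi r)\<^sup>2" using that by force
    have sub: "{p1..p2} \<subseteq> {0..1}" using pq by auto
    have "(LBINT r:{p1..p2}. W2 * T) \<le> (LBINT r:{p1..p2}. rho r * (phi r)\<^sup>2)"
    proof (rule set_integral_mono)
      show "set_integrable lborel {p1..p2} (\<lambda>r. W2 * T)" by (rule set_integrable_const_Icc)
      show "set_integrable lborel {p1..p2} (\<lambda>r. rho r * (phi r)\<^sup>2)"
        by (rule set_integrable_subset[OF i1 _ sub]) simp
      fix x assume "x \<in> {p1..p2}"
      then have "T < (phi x)\<^sup>2" "W2 \<le> rho x" using big W2 by auto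
      then show "W2 * T \<le> rho x * (phi x)\<^sup>2"
        using W2 T0 by (intro mult_mono) auto
    qed
    also have "\<dots> \<le> (LBINT r:{0..1}. rho r * (phi r)\<^sup>2)"
      by (rule set_int_subset_le[OF i1 sub]) (use rho_nn in auto)
    also have "\<dots> \<le> 1" by (rule n1)
    finally have X: "(LBINT r:{p1..p2}. W2 * T) \<le> 1" .
    have eqc: "(LBINT r:{p1..p2}. W2 * T) = (p2 - p1) * (W2 * T)" by (rule set_integral_const_Icc) (use pq in simp)
    have "(p2 - p1) * (W2 * T) \<le> 1" using X eqc by linarith
    moreover have "(p2 - p1) * (W2 * T) = 2" unfolding T_def using pq W2 by (simp add: field_simps)
    ultimately show False by simp
  qed
  define I where "I = (LBINT t:{p..q}. (dphi t)\<^sup>2)"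
  have ipq: "set_integrable lborel {p..q} (\<lambda>t. (dphi t)\<^sup>2)" using H1_int_sub(2)[OF H, of p q] pq by simp
  have subpq: "{p..q} \<subseteq> {0..1}" using pq by auto
  have I_le: "I \<le> M / W1"
  proof -
    have "I \<le> (LBINT t:{p..q}. rho t * (dphi t)\<^sup>2 / W1)"
      unfolding I_def
    proof (rule set_integral_mono[OF ipq])
      show "set_integrable lborel {p..q} (\<lambda>t. rho t * (dphi t)\<^sup>2 / W1)"
        by (intro set_integrable_divide set_integrable_subset[OF i2 _ subpq]) simp
      fix t assume "t \<in> {p..q}"
      then have "W1 * (dphi t)\<^sup>2 \<le> rho t * (dphi t)\<^sup>2" using W1 by (intro mult_right_mono) auto
      then show "(dphi t)\<^sup>2 \<le> rho t * (dphi t)\<^sup>2 / W1" using W1 by (simp add: field_simps)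
    qed
    also have "\<dots> = (LBINT t:{p..q}. rho t * (dphi t)\<^sup>2) / W1" by (rule set_integral_divide_zero)
    also have "(LBINT t:{p..q}. rho t * (dphi t)\<^sup>2) \<le> M"
      using set_int_subset_le[OF i2 subpq] rho_nn n2 by force
    then have "(LBINT t:{p..q}. rho t * (dphi t)\<^sup>2) / W1 \<le> M / W1" using W1 by (intro divide_right_mono) auto
    finally show ?thesis .
  qed
  define u where "u = min e r"
  define v where "v = max e r"
  have uv: "p \<le> u" "u \<le> v" "v \<le> q" using r e pq unfolding u_def v_def by auto
  have diff: "phi v - phi u = (LBINT t:{u..v}. dphi t)" using H1_diff[OF H, of u v] uv pq by simp
  have "(phi e - phi r)\<^sup>2 = (phi v - phi u)\<^sup>2"
    unfolding u_def v_def by (cases "e \<le> r") (auto simp: power2_commute)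
  also have "\<dots> \<le> (v - u) * (LBINT t:{u..v}. (dphi t)\<^sup>2)"
    unfolding diff using H1_int_sub[OF H, of u v] uv pq by (intro int_CS) auto
  also have "\<dots> \<le> (q - p) * I"
  proof (rule mult_mono)
    show "(LBINT t:{u..v}. (dphi t)\<^sup>2) \<le> I"
      unfolding I_def using uv by (intro set_int_subset_le[OF ipq]) auto
    show "0 \<le> (LBINT t:{u..v}. (dphi t)\<^sup>2)" by (intro set_int_nonneg) auto
  qed (use uv in auto)
  also have "\<dots> \<le> (q - p) * (M / W1)" using I_le uv by (intro mult_left_mono) auto
  finally have d2: "(phi e - phi r)\<^sup>2 \<le> (q - p) * (M / W1)" .
  have "(phi e)\<^sup>2 \<le> 2 * (phi r)\<^sup>2 + 2 * (phi e - phi r)\<^sup>2"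
    using sq_sum_le[of "phi r" "phi e - phi r"] by simp
  also have "\<dots> \<le> 2 * T + 2 * ((q - p) * (M / W1))" using r d2 by linarith
  also have "\<dots> = 4 / (W2 * (p2 - p1)) + 2 * (q - p) * M / W1" unfolding T_def by simp
  finally show ?thesis .
qed


lemma choose_k:
  fixes h \<beta> \<nu> :: real
  assumes h: "0 < h" "h < 1" and \<beta>: "0 < \<beta>" "\<beta> < 1" and \<nu>: "1 < \<nu>"
  shows "\<exists>\<gamma>>0. \<exists>C. \<forall>K::nat. \<exists>S0. \<forall>s\<ge>S0. \<exists>k\<ge>K.
           exp (- 2 * s * \<nu> * h ^ k) / \<beta> ^ k \<le> C * exp (- \<gamma> * k) \<and>
           \<beta> ^ k * exp (2 * s * h ^ Suc k) \<le> C * exp (- \<gamma> * k)"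
proof -
  define q where "q = - ln \<beta>"
  have q: "0 < q" unfolding q_def using \<beta> by simp
  have bk: "\<beta> ^ k = exp (- q * k)" for k :: nat
  proof -
    have "exp (real k * ln \<beta>) = exp (ln \<beta>) ^ k" by (rule exp_of_nat_mult)
    then show ?thesis unfolding q_def using \<beta> by (simp add: mult.commute)
  qed
  define \<mu> where "\<mu> = 2 * q / ((1 + \<nu>) * h)"
  have \<mu>: "0 < \<mu>" unfolding \<mu>_def using q h \<nu> by simp
  define \<gamma> where "\<gamma> = q * (\<nu> - 1) / (1 + \<nu>)"
  have \<gamma>: "0 < \<gamma>" unfolding \<gamma>_def using q \<nu> by simp
  have hmu: "h * \<mu> = 2 * q / (1 + \<nu>)"
  proof -
    have "h \<noteq> 0" "1 + \<nu> \<noteq> 0" using h \<nu> by auto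
    then show ?thesis unfolding \<mu>_def by (simp add: mult.commute[of _ h])
  qed
  have nu1: "1 + \<nu> \<noteq> 0" using \<nu> by simp
  have "\<nu> * h * \<mu> = \<nu> * (2 * q / (1 + \<nu>))" using hmu by (simp add: mult.assoc)
  then have g1: "\<nu> * h * \<mu> - q = \<gamma>" unfolding \<gamma>_def
    using nu1 by (simp add: field_simps)
  have g2: "q - h * \<mu> = \<gamma>" unfolding \<gamma>_def hmu using nu1 by (simp add: field_simps)
  define C where "C = exp (\<nu> * h * \<mu>)"
  have C1: "1 \<le> C" unfolding C_def using \<nu> h \<mu> by simp
  have main: "\<forall>K::nat. \<exists>S0. \<forall>s\<ge>S0. \<exists>k\<ge>K.
           exp (- 2 * s * \<nu> * h ^ k) / \<beta> ^ k \<le> C * exp (- \<gamma> * k) \<and>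
           \<beta> ^ k * exp (2 * s * h ^ Suc k) \<le> C * exp (- \<gamma> * k)"
  proof (rule allI)
    fix K :: nat
    define K' where "K' = max K 1"
    define S0 where "S0 = \<mu> * K' / (2 * h ^ K') + 1"
    show "\<exists>S0. \<forall>s\<ge>S0. \<exists>k\<ge>K. exp (- 2 * s * \<nu> * h ^ k) / \<beta> ^ k \<le> C * exp (- \<gamma> * k) \<and>
           \<beta> ^ k * exp (2 * s * h ^ Suc k) \<le> C * exp (- \<gamma> * k)"
    proof (intro exI[of _ S0] allI impI)
      fix s assume s: "S0 \<le> s"
      have "0 \<le> \<mu> * K' / (2 * h ^ K')" using \<mu> h by simp
      then have S0pos: "0 < S0" unfolding S0_def by linarith
      have spos: "0 < s" using s S0pos by simp
      define P where "P n \<longleftrightarrow> 2 * s * h ^ n \<le> \<mu> * n" for n :: nat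
      define n0 where "n0 = nat \<lceil>2 * s / \<mu>\<rceil>"
      have "P n0"
      proof -
        have "2 * s / \<mu> \<le> n0" unfolding n0_def by linarith
        then have "2 * s \<le> \<mu> * n0" using \<mu> by (simp add: field_simps)
        moreover have "2 * s * h ^ n0 \<le> 2 * s" using spos h by (simp add: power_le_one)
        ultimately show ?thesis unfolding P_def by linarith
      qed
      define k where "k = (LEAST n. P n)"
      have Pk: "P k" unfolding k_def by (rule LeastI[of P n0, OF \<open>P n0\<close>])
      have notP: "\<not> P n" if "n < k" for n using not_less_Least[of n P] that unfolding k_def by blast
      have kK: "K' \<le> k"
      proof (rule ccontr)
        assume "\<not> K' \<le> k"
        then have "k < K'" by simp
        have "h ^ K' \<le> h ^ k" using h \<open>k < K'\<close> by (intro power_decreasing) auto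
        then have "2 * s * h ^ K' \<le> 2 * s * h ^ k" using spos by simp
        moreover have "\<mu> * K' < 2 * s * h ^ K'"
        proof -
          have "\<mu> * K' / (2 * h ^ K') < s" using s unfolding S0_def by simp
          then show ?thesis using h by (simp add: field_simps)
        qed
        moreover have "\<mu> * k < \<mu> * K'" using \<mu> \<open>k < K'\<close> by simp
        ultimately show False using Pk unfolding P_def by linarith
      qed
      then obtain j where kj: "k = Suc j" using K'_def by (cases k) auto
      have "\<not> P j" using notP kj by simp
      then have Pj: "\<mu> * j < 2 * s * h ^ j" unfolding P_def by simp
      have hk: "h * \<mu> * j < 2 * s * h ^ k"
        using mult_strict_left_mono[OF Pj h(1)] kj by (simp add: algebra_simps)
      show "\<exists>k\<ge>K. exp (- 2 * s * \<nu> * h ^ k) / \<beta> ^ k \<le> C * exp (- \<gamma> * k) \<and>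
           \<beta> ^ k * exp (2 * s * h ^ Suc k) \<le> C * exp (- \<gamma> * k)"
      proof (intro exI[of _ k] conjI)
        show "K \<le> k" using kK K'_def by simp
        have "exp (- 2 * s * \<nu> * h ^ k) / \<beta> ^ k = exp (- \<nu> * (2 * s * h ^ k) + q * k)"
          unfolding bk by (simp add: exp_diff[symmetric] exp_add algebra_simps)
        also have "\<dots> \<le> exp (\<nu> * h * \<mu> - \<gamma> * k)"
        proof -
          have "\<nu> * (h * \<mu> * j) \<le> \<nu> * (2 * s * h ^ k)" using hk \<nu> by simp
          moreover have "\<nu> * (h * \<mu> * j) = \<nu> * h * \<mu> * k - \<nu> * h * \<mu>" using kj by (simp add: algebra_simps)
          moreover have "\<nu> * h * \<mu> * k = (\<gamma> + q) * k" using g1 by simp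
          ultimately have "- \<nu> * (2 * s * h ^ k) + q * k \<le> \<nu> * h * \<mu> - \<gamma> * k"
            by (simp add: algebra_simps)
          then show ?thesis by simp
        qed
        also have "\<dots> = C * exp (- \<gamma> * k)" unfolding C_def by (simp add: exp_add[symmetric])
        finally show "exp (- 2 * s * \<nu> * h ^ k) / \<beta> ^ k \<le> C * exp (- \<gamma> * k)" .
        have "\<beta> ^ k * exp (2 * s * h ^ Suc k) = exp (- q * k + h * (2 * s * h ^ k))"
          unfolding bk by (simp add: exp_add[symmetric] algebra_simps)
        also have "\<dots> \<le> exp (- \<gamma> * k)"
        proof -
          have "h * (2 * s * h ^ k) \<le> h * (\<mu> * k)" using Pk h unfolding P_def by simp
          moreover have "- q * k + h * (\<mu> * k) = - \<gamma> * k" using g2 by (simp add: algebra_simps)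
          ultimately show ?thesis by simp
        qed
        also have "\<dots> \<le> C * exp (- \<gamma> * k)" using C1 by simp
        finally show "\<beta> ^ k * exp (2 * s * h ^ Suc k) \<le> C * exp (- \<gamma> * k)" .
      qed
    qed
  qed
  show ?thesis using \<gamma> main by blast
qed


lemma cont_mult_integrable:
  fixes f g :: "real \<Rightarrow> real"
  assumes fc: "continuous_on {p..q} f" and g: "set_integrable lborel {p..q} g"
  shows "set_integrable lborel {p..q} (\<lambda>x. f x * g x)"
proof -
  have "bounded (f ` {p..q})" by (intro compact_imp_bounded compact_continuous_image fc compact_Icc)
  then obtain B0 where B0: "\<forall>y\<in>f ` {p..q}. norm y \<le> B0" unfolding bounded_iff by blast
  define B where "B = max B0 0"
  have B: "\<And>x. x \<in> {p..q} \<Longrightarrow> \<bar>f x\<bar> \<le> B" "0 \<le> B" using B0 unfolding B_def by force+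
  have m1: "(\<lambda>x. indicator {p..q} x *\<^sub>R f x) \<in> borel_measurable lborel"
    using borel_measurable_continuous_on_indicator[OF _ fc] by simp
  have m2: "(\<lambda>x. indicator {p..q} x *\<^sub>R g x) \<in> borel_measurable lborel"
    using g unfolding set_integrable_def by (rule borel_measurable_integrable)
  have "(\<lambda>x. indicator {p..q} x *\<^sub>R (f x * g x)) =
      (\<lambda>x. (indicator {p..q} x *\<^sub>R f x) * (indicator {p..q} x *\<^sub>R g x))"
    by (auto simp: indicator_def fun_eq_iff)
  then have meas: "set_borel_measurable lborel {p..q} (\<lambda>x. f x * g x)"
    unfolding set_borel_measurable_def using m1 m2 by simp
  show ?thesis
  proof (rule set_integrable_bound[OF _ meas])
    show "set_integrable lborel {p..q} (\<lambda>x. B * g x)" using g by simp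
    show "AE x in lborel. x \<in> {p..q} \<longrightarrow> norm (f x * g x) \<le> norm (B * g x)"
      using B by (auto simp: abs_mult intro!: mult_right_mono)
  qed
qed

lemma cont_integrable:
  fixes f :: "real \<Rightarrow> real"
  shows "continuous_on {p..q} f \<Longrightarrow> set_integrable lborel {p..q} f"
  by (rule borel_integrable_atLeastAtMost')

lemma indicator_integrable:
  fixes f :: "real \<Rightarrow> real"
  assumes "set_integrable lborel B f" "B \<subseteq> A"
  shows "set_integrable lborel A (\<lambda>x. indicator B x * f x)"
    and "(LBINT x:A. indicator B x * f x) = (LBINT x:B. f x)"
proof -
  have eq: "(\<lambda>x. indicator A x *\<^sub>R (indicator B x * f x)) = (\<lambda>x. indicator B x *\<^sub>R f x)"
    using assms(2) by (auto simp: indicator_def fun_eq_iff)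
  show "set_integrable lborel A (\<lambda>x. indicator B x * f x)"
    using assms(1) unfolding set_integrable_def eq .
  show "(LBINT x:A. indicator B x * f x) = (LBINT x:B. f x)"
    unfolding set_lebesgue_integral_def eq ..
qed


lemma H10_scale:
  assumes "H10_pair a b psi dpsi"
  shows "H10_pair a b (\<lambda>r. psi r * k) (\<lambda>r. dpsi r * k)"
proof -
  have H: "H1_pair a b psi dpsi" "psi a = 0" "psi b = 0" using assms unfolding H10_pair_def by auto
  have i1: "set_integrable lborel {a..b} dpsi" and i2: "set_integrable lborel {a..b} (\<lambda>t. (dpsi t)\<^sup>2)"
    and eq: "\<forall>x\<in>{a..b}. psi x = psi a + (LBINT t:{a..x}. dpsi t)"
    using H(1) unfolding H1_pair_def by blast+
  have sq: "(\<lambda>r. (dpsi r * k)\<^sup>2) = (\<lambda>r. (dpsi r)\<^sup>2 * k\<^sup>2)" by (simp add: power_mult_distrib)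
  have "H1_pair a b (\<lambda>r. psi r * k) (\<lambda>r. dpsi r * k)"
    unfolding H1_pair_def
  proof (intro conjI ballI)
    show "set_integrable lborel {a..b} (\<lambda>r. dpsi r * k)" using i1 by simp
    show "set_integrable lborel {a..b} (\<lambda>r. (dpsi r * k)\<^sup>2)" unfolding sq using i2 by simp
    fix x assume x: "x \<in> {a..b}"
    have "psi x = psi a + (LBINT t:{a..x}. dpsi t)" using bspec[OF eq x] .
    then show "psi x * k = psi a * k + (LBINT t:{a..x}. dpsi t * k)"
      by (simp add: algebra_simps)
  qed
  then show ?thesis unfolding H10_pair_def using H by simp
qed

definition DSet :: "nat \<Rightarrow> (real \<Rightarrow> real) \<Rightarrow> real \<Rightarrow> real \<Rightarrow> real set" where
  "DSet d c a b = {(LBINT r:{a..b}. r ^ (d - 1) * ((dphi r)\<^sup>2 + c r * (phi r)\<^sup>2))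
       | phi dphi. H10_pair a b phi dphi \<and> (LBINT r:{a..b}. r ^ (d - 1) * (phi r)\<^sup>2) = 1}"

lemma lambda_D_DSet: "lambda_D d c a b = Inf (DSet d c a b)"
  unfolding lambda_D_def DSet_def ..

locale dir =
  fixes a b :: real and c :: "real \<Rightarrow> real" and d :: nat
  assumes a0: "0 < a" and ab: "a < b" and cpos: "\<forall>r\<in>{a..b}. 0 < c r"
    and ccont: "continuous_on {a..b} c"
begin

lemma Q_nonneg: "0 \<le> (LBINT r:{a..b}. r ^ (d - 1) * ((dphi r)\<^sup>2 + c r * (phi r)\<^sup>2))"
proof (intro set_int_nonneg)
  fix r assume r: "r \<in> {a..b}"
  have "0 < c r" using cpos r by blast
  then have "0 \<le> c r" "0 \<le> r" using a0 r by auto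
  then show "0 \<le> r ^ (d - 1) * ((dphi r)\<^sup>2 + c r * (phi r)\<^sup>2)" by simp
qed

lemma DSet_nonneg: "v \<in> DSet d c a b \<Longrightarrow> 0 \<le> v"
  unfolding DSet_def using Q_nonneg by auto

lemma DSet_bdd: "bdd_below (DSet d c a b)"
  using DSet_nonneg by (auto simp: bdd_below_def)

lemma dirichlet_ineq:
  assumes H: "H10_pair a b psi dpsi"
  shows "lambda_D d c a b * (LBINT r:{a..b}. r ^ (d - 1) * (psi r)\<^sup>2)
     \<le> (LBINT r:{a..b}. r ^ (d - 1) * ((dpsi r)\<^sup>2 + c r * (psi r)\<^sup>2))"
proof -
  define N where "N = (LBINT r:{a..b}. r ^ (d - 1) * (psi r)\<^sup>2)"
  define Q where "Q = (LBINT r:{a..b}. r ^ (d - 1) * ((dpsi r)\<^sup>2 + c r * (psi r)\<^sup>2))"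
  have N0: "0 \<le> N" unfolding N_def using a0 by (intro set_int_nonneg) auto
  have Q0: "0 \<le> Q" unfolding Q_def by (rule Q_nonneg)
  show ?thesis
  proof (cases "N = 0")
    case True then show ?thesis using Q0 unfolding N_def[symmetric] Q_def[symmetric] by simp
  next
    case False
    then have Np: "0 < N" using N0 by simp
    define k where "k = 1 / sqrt N"
    have k2: "k\<^sup>2 = 1 / N" unfolding k_def using Np by (simp add: power_divide)
    have Hk: "H10_pair a b (\<lambda>r. psi r * k) (\<lambda>r. dpsi r * k)" by (rule H10_scale[OF H])
    have "(LBINT r:{a..b}. r ^ (d - 1) * (psi r * k)\<^sup>2) = (LBINT r:{a..b}. k\<^sup>2 * (r ^ (d - 1) * (psi r)\<^sup>2))"
      by (simp add: power_mult_distrib algebra_simps)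
    also have "\<dots> = k\<^sup>2 * N" unfolding N_def by simp
    also have "\<dots> = 1" using k2 Np by simp
    finally have n1: "(LBINT r:{a..b}. r ^ (d - 1) * (psi r * k)\<^sup>2) = 1" .
    have "(LBINT r:{a..b}. r ^ (d - 1) * ((dpsi r * k)\<^sup>2 + c r * (psi r * k)\<^sup>2))
        = (LBINT r:{a..b}. k\<^sup>2 * (r ^ (d - 1) * ((dpsi r)\<^sup>2 + c r * (psi r)\<^sup>2)))"
      by (simp add: power_mult_distrib algebra_simps)
    also have "\<dots> = Q / N" unfolding Q_def using k2 by simp
    finally have "Q / N \<in> DSet d c a b" unfolding DSet_def using Hk n1 by force
    then have "lambda_D d c a b \<le> Q / N" unfolding lambda_D_DSet by (rule cInf_lower[OF _ DSet_bdd])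
    then have "lambda_D d c a b * N \<le> Q / N * N" using Np by (intro mult_right_mono) auto
    then show ?thesis using Np unfolding N_def[symmetric] Q_def[symmetric] by simp
  qed
qed

lemma witness: "\<exists>phi dphi. H10_pair a b phi dphi \<and> (LBINT r:{a..b}. r ^ (d - 1) * (phi r)\<^sup>2) = 1"
proof -
  define f0 where "f0 r = (r - a) * (b - r)" for r
  define df0 where "df0 r = a + b - 2 * r" for r
  have cf: "continuous_on {p..q} f0" "continuous_on {p..q} df0" "continuous_on {p..q} (\<lambda>r. (df0 r)\<^sup>2)" for p q
    unfolding f0_def df0_def by (auto intro!: continuous_intros)
  have H1: "H1_pair a b f0 df0"
    unfolding H1_pair_def
  proof (intro conjI ballI)
    show "set_integrable lborel {a..b} df0" "set_integrable lborel {a..b} (\<lambda>x. (df0 x)\<^sup>2)"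
      using cf by (auto intro: cont_integrable)
    fix x assume x: "x \<in> {a..b}"
    have der: "(f0 has_vector_derivative df0 t) (at t within {a..x})" for t
      unfolding has_real_derivative_iff_has_vector_derivative[symmetric] f0_def df0_def
      by (auto intro!: derivative_eq_intros)
    have "(LBINT t:{a..x}. df0 t) = f0 x - f0 a"
      unfolding set_lebesgue_integral_def
      using x by (intro integral_FTC_atLeastAtMost der cf) auto
    then show "f0 x = f0 a + (LBINT t:{a..x}. df0 t)" by simp
  qed
  have H10: "H10_pair a b f0 df0" unfolding H10_pair_def using H1 by (simp add: f0_def)
  define N where "N = (LBINT r:{a..b}. r ^ (d - 1) * (f0 r)\<^sup>2)"
  have iN: "set_integrable lborel {a..b} (\<lambda>r. r ^ (d - 1) * (f0 r)\<^sup>2)"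
    by (intro cont_integrable) (auto simp: f0_def intro!: continuous_intros)
  define a' where "a' = a + (b - a) / 4"
  define b' where "b' = b - (b - a) / 4"
  define K where "K = a ^ (d - 1) * ((b - a) / 4) ^ 4"
  have a'b': "a \<le> a'" "a' < b'" "b' \<le> b" unfolding a'_def b'_def using ab by (auto simp: field_simps)
  have K0: "0 < K" unfolding K_def using a0 ab by simp
  have "(LBINT r:{a'..b'}. K) \<le> (LBINT r:{a'..b'}. r ^ (d - 1) * (f0 r)\<^sup>2)"
  proof (rule set_integral_mono)
    show "set_integrable lborel {a'..b'} (\<lambda>r. K)" by (rule set_integrable_const_Icc)
    show "set_integrable lborel {a'..b'} (\<lambda>r. r ^ (d - 1) * (f0 r)\<^sup>2)"
      by (intro cont_integrable) (auto simp: f0_def intro!: continuous_intros)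
    fix r assume r: "r \<in> {a'..b'}"
    have r1: "a + (b - a) / 4 \<le> r" "r \<le> b - (b - a) / 4" using r unfolding a'_def b'_def by auto
    have "(b - a) / 4 \<le> r - a" using r1(1) by linarith
    moreover have "(b - a) / 4 \<le> b - r" using r1(2) by linarith
    ultimately have "(b - a) / 4 * ((b - a) / 4) \<le> (r - a) * (b - r)" using ab by (intro mult_mono) auto
    then have "((b - a) / 4)\<^sup>2 \<le> f0 r" unfolding f0_def by (simp add: power2_eq_square)
    then have "(((b - a) / 4)\<^sup>2)\<^sup>2 \<le> (f0 r)\<^sup>2" using ab by (intro power_mono) auto
    then have f4: "((b - a) / 4) ^ 4 \<le> (f0 r)\<^sup>2" by (simp add: power_mult[symmetric])
    have "a ^ (d - 1) \<le> r ^ (d - 1)" using r a'b' a0 by (intro power_mono) auto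
    moreover have "0 \<le> r ^ (d - 1)" using r a'b' a0 by simp
    ultimately show "K \<le> r ^ (d - 1) * (f0 r)\<^sup>2" unfolding K_def using f4 a0 ab
      by (intro mult_mono) auto
  qed
  also have "\<dots> \<le> N" unfolding N_def
    using a'b' a0 by (intro set_int_subset_le[OF iN]) auto
  finally have "(b' - a') * K \<le> N" using a'b' by (simp add: set_integral_const_Icc)
  moreover have "0 < (b' - a') * K" using a'b' K0 by simp
  ultimately have Np: "0 < N" by simp
  define k where "k = 1 / sqrt N"
  have k2: "k\<^sup>2 = 1 / N" unfolding k_def using Np by (simp add: power_divide)
  have "(LBINT r:{a..b}. r ^ (d - 1) * (f0 r * k)\<^sup>2) = (LBINT r:{a..b}. k\<^sup>2 * (r ^ (d - 1) * (f0 r)\<^sup>2))"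
    by (simp add: power_mult_distrib algebra_simps)
  also have "\<dots> = 1" unfolding N_def[symmetric] set_integral_mult_right using k2 Np by simp
  finally show ?thesis using H10_scale[OF H10, of k] by blast
qed

lemma DSet_ne: "DSet d c a b \<noteq> {}"
  using witness unfolding DSet_def by blast

lemma lambda_D_nonneg: "0 \<le> lambda_D d c a b"
  unfolding lambda_D_DSet by (rule cInf_greatest[OF DSet_ne DSet_nonneg])

end


definition LSet :: "nat \<Rightarrow> (real \<Rightarrow> real) \<Rightarrow> (real \<Rightarrow> real) \<Rightarrow> real \<Rightarrow> real set" where
  "LSet d m c s = {(LBINT r:{0..1}. r ^ (d - 1) * exp (2 * s * m r) * ((dphi r)\<^sup>2 + c r * (phi r)\<^sup>2))
       | phi dphi. H1_pair 0 1 phi dphi \<and>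
           (LBINT r:{0..1}. r ^ (d - 1) * exp (2 * s * m r) * (phi r)\<^sup>2) = 1}"

lemma lambda_s_LSet: "lambda_s d m c s = Inf (LSet d m c s)"
  unfolding lambda_s_def LSet_def ..

lemma LSet_nonneg:
  assumes cpos: "\<forall>r\<in>{0..1}. 0 < c r" and v: "v \<in> LSet d m c s"
  shows "0 \<le> v"
proof -
  have "0 \<le> (LBINT r:{0..1}. r ^ (d - 1) * exp (2 * s * m r) * ((dphi r)\<^sup>2 + c r * (phi r)\<^sup>2))"
    for phi dphi :: "real \<Rightarrow> real"
  proof (intro set_int_nonneg)
    fix r :: real assume r: "r \<in> {0..1}"
    have "0 < c r" using cpos r by blast
    then show "0 \<le> r ^ (d - 1) * exp (2 * s * m r) * ((dphi r)\<^sup>2 + c r * (phi r)\<^sup>2)"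
      using r by simp
  qed
  then show ?thesis using v unfolding LSet_def by auto
qed

lemma LSet_bdd: "\<forall>r\<in>{0..1}. 0 < c r \<Longrightarrow> bdd_below (LSet d m c s)"
  using LSet_nonneg unfolding bdd_below_def by blast

lemma ext_in_LSet:
  fixes phi dphi m c :: "real \<Rightarrow> real" and a b s :: real
  assumes a0: "0 < a" and ab: "a < b" and b1: "b < 1" and mz: "\<forall>r\<in>{a..b}. m r = 0"
    and H: "H10_pair a b phi dphi" and n: "(LBINT r:{a..b}. r ^ (d - 1) * (phi r)\<^sup>2) = 1"
  shows "(LBINT r:{a..b}. r ^ (d - 1) * ((dphi r)\<^sup>2 + c r * (phi r)\<^sup>2)) \<in> LSet d m c s"
proof -
  define pe where "pe r = indicator {a..b} r * phi r" for r
  define dpe where "dpe r = indicator {a..b} r * dphi r" for r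
  have H1: "H1_pair a b phi dphi" and pa: "phi a = 0" and pb: "phi b = 0"
    using H unfolding H10_pair_def by auto
  have i1: "set_integrable lborel {a..b} dphi" and i2: "set_integrable lborel {a..b} (\<lambda>t. (dphi t)\<^sup>2)"
    using H1 unfolding H1_pair_def by blast+
  have sub: "{a..b} \<subseteq> {0..1}" using a0 b1 by auto
  have He: "H1_pair 0 1 pe dpe"
    unfolding H1_pair_def
  proof (intro conjI ballI)
    show "set_integrable lborel {0..1} dpe" unfolding dpe_def by (rule indicator_integrable(1)[OF i1 sub])
    have "(\<lambda>x. (dpe x)\<^sup>2) = (\<lambda>x. indicator {a..b} x * (dphi x)\<^sup>2)"
      unfolding dpe_def by (auto simp: indicator_def fun_eq_iff)
    then show "set_integrable lborel {0..1} (\<lambda>x. (dpe x)\<^sup>2)"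
      using indicator_integrable(1)[OF i2 sub] by simp
    fix x :: real assume x: "x \<in> {0..1}"
    have pe0: "pe 0 = 0" unfolding pe_def using a0 by simp
    consider "x < a" | "a \<le> x" "x \<le> b" | "b < x" by linarith
    then show "pe x = pe 0 + (LBINT t:{0..x}. dpe t)"
    proof cases
      case 1
      have "(LBINT t:{0..x}. dpe t) = (LBINT t:{0..x}. 0)"
        using 1 by (intro set_lebesgue_integral_cong) (auto simp: dpe_def)
      moreover have "pe x = 0" using 1 by (simp add: pe_def)
      ultimately show ?thesis using pe0 by simp
    next
      case 2
      have "(LBINT t:{0..x}. dpe t) = (LBINT t:{a..x}. dphi t)"
        unfolding set_lebesgue_integral_def dpe_def
        by (rule arg_cong[where f="integral\<^sup>L lborel"]) (use 2 a0 in \<open>auto simp: indicator_def fun_eq_iff\<close>)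
      also have "\<dots> = phi x - phi a" using H1_diff[OF H1, of a x] 2 by simp
      moreover have "pe x = phi x" using 2 by (simp add: pe_def)
      ultimately show ?thesis using pe0 pa by simp
    next
      case 3
      have "(LBINT t:{0..x}. dpe t) = (LBINT t:{a..b}. dphi t)"
        unfolding set_lebesgue_integral_def dpe_def
        by (rule arg_cong[where f="integral\<^sup>L lborel"]) (use 3 a0 in \<open>auto simp: indicator_def fun_eq_iff\<close>)
      also have "\<dots> = phi b - phi a" using H1_diff[OF H1, of a b] ab by simp
      moreover have "pe x = 0" using 3 by (simp add: pe_def)
      ultimately show ?thesis using pe0 pa pb by simp
    qed
  qed
  have e1: "(LBINT r:{0..1}. r ^ (d - 1) * exp (2 * s * m r) * (pe r)\<^sup>2) = (LBINT r:{a..b}. r ^ (d - 1) * (phi r)\<^sup>2)"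
    unfolding set_lebesgue_integral_def pe_def
    by (rule arg_cong[where f="integral\<^sup>L lborel"]) (use sub mz in \<open>auto simp: indicator_def fun_eq_iff\<close>)
  have e2: "(LBINT r:{0..1}. r ^ (d - 1) * exp (2 * s * m r) * ((dpe r)\<^sup>2 + c r * (pe r)\<^sup>2))
      = (LBINT r:{a..b}. r ^ (d - 1) * ((dphi r)\<^sup>2 + c r * (phi r)\<^sup>2))"
    unfolding set_lebesgue_integral_def pe_def dpe_def
    by (rule arg_cong[where f="integral\<^sup>L lborel"]) (use sub mz in \<open>auto simp: indicator_def fun_eq_iff\<close>)
  show ?thesis unfolding LSet_def using He e1 e2 n by force
qed

lemma upper_bound:
  assumes a0: "0 < a" and ab: "a < b" and b1: "b < 1" and mz: "\<forall>r\<in>{a..b}. m r = 0"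
    and cpos0: "\<forall>r\<in>{0..1}. 0 < c r" and ccont0: "continuous_on {0..1} c"
  shows "lambda_s d m c s \<le> lambda_D d c a b"
proof -
  interpret dir a b c d
    using a0 ab b1 cpos0 ccont0 by unfold_locales (auto intro: continuous_on_subset)
  have "DSet d c a b \<subseteq> LSet d m c s"
    unfolding DSet_def using ext_in_LSet[OF a0 ab b1 mz] by blast
  then show ?thesis unfolding lambda_s_LSet lambda_D_DSet
    by (rule cInf_superset_mono[OF DSet_ne LSet_bdd[OF cpos0]])
qed


lemma sq_theta:
  fixes x y \<theta> :: real
  assumes t: "0 < \<theta>"
  shows "(x + y)\<^sup>2 \<le> (1 + \<theta>) * x\<^sup>2 + (1 + 1 / \<theta>) * y\<^sup>2"
proof -
  have e: "\<theta> * (\<theta> * x\<^sup>2 + y\<^sup>2 / \<theta> - 2 * x * y) = (\<theta> * x - y)\<^sup>2"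
    using t by (simp add: field_simps power2_eq_square)
  have "0 \<le> \<theta> * (\<theta> * x\<^sup>2 + y\<^sup>2 / \<theta> - 2 * x * y)" unfolding e by simp
  then have "0 \<le> \<theta> * x\<^sup>2 + y\<^sup>2 / \<theta> - 2 * x * y" using t by (simp add: zero_le_mult_iff)
  moreover have "(x + y)\<^sup>2 = x\<^sup>2 + 2 * x * y + y\<^sup>2" by (simp add: power2_eq_square algebra_simps)
  moreover have "(1 + \<theta>) * x\<^sup>2 + (1 + 1 / \<theta>) * y\<^sup>2 = x\<^sup>2 + y\<^sup>2 + (\<theta> * x\<^sup>2 + y\<^sup>2 / \<theta>)"
    by (simp add: algebra_simps)
  ultimately show ?thesis by linarith
qed

lemma pw1:
  fixes w c p k f l \<theta> :: real
  assumes t: "0 < \<theta>" and w: "0 \<le> w" and c: "0 \<le> c"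
  shows "w * ((p - k)\<^sup>2 + c * (f - l)\<^sup>2) \<le> (1 + \<theta>) * (w * (p\<^sup>2 + c * f\<^sup>2)) + (1 + 1 / \<theta>) * (w * (k\<^sup>2 + c * l\<^sup>2))"
proof -
  have 1: "(p - k)\<^sup>2 \<le> (1 + \<theta>) * p\<^sup>2 + (1 + 1 / \<theta>) * k\<^sup>2" using sq_theta[OF t, of p "- k"] by simp
  have 2: "(f - l)\<^sup>2 \<le> (1 + \<theta>) * f\<^sup>2 + (1 + 1 / \<theta>) * l\<^sup>2" using sq_theta[OF t, of f "- l"] by simp
  have "c * (f - l)\<^sup>2 \<le> c * ((1 + \<theta>) * f\<^sup>2 + (1 + 1 / \<theta>) * l\<^sup>2)" using 2 c by (rule mult_left_mono)
  then have "(p - k)\<^sup>2 + c * (f - l)\<^sup>2 \<le> (1 + \<theta>) * (p\<^sup>2 + c * f\<^sup>2) + (1 + 1 / \<theta>) * (k\<^sup>2 + c * l\<^sup>2)"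
    using 1 by (simp add: algebra_simps)
  then have "w * ((p - k)\<^sup>2 + c * (f - l)\<^sup>2) \<le> w * ((1 + \<theta>) * (p\<^sup>2 + c * f\<^sup>2) + (1 + 1 / \<theta>) * (k\<^sup>2 + c * l\<^sup>2))"
    using w by (rule mult_left_mono)
  then show ?thesis by (simp add: algebra_simps)
qed

lemma pw2:
  fixes w g l \<theta> :: real
  assumes t: "0 < \<theta>" and w: "0 \<le> w"
  shows "w * (g + l)\<^sup>2 \<le> (1 + \<theta>) * (w * g\<^sup>2) + (1 + 1 / \<theta>) * (w * l\<^sup>2)"
proof -
  have "w * (g + l)\<^sup>2 \<le> w * ((1 + \<theta>) * g\<^sup>2 + (1 + 1 / \<theta>) * l\<^sup>2)"
    using sq_theta[OF t, of g l] w by (rule mult_left_mono)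
  then show ?thesis by (simp add: algebra_simps)
qed

context dir begin

lemma inner_bound:
  fixes phi dphi :: "real \<Rightarrow> real"
  assumes b1: "b \<le> 1" and cmax: "\<forall>r\<in>{a..b}. c r \<le> Cm" and Cm0: "0 \<le> Cm"
    and H: "H1_pair a b phi dphi" and t: "0 < \<theta>"
  defines "LD \<equiv> lambda_D d c a b"
    and "K0 \<equiv> 2 / (b - a)\<^sup>2 + 2 * Cm + 2"
    and "S \<equiv> (phi a)\<^sup>2 + (phi b)\<^sup>2"
  shows "LD * (LBINT r:{a..b}. r ^ (d - 1) * (phi r)\<^sup>2)
     \<le> (1 + \<theta>)\<^sup>2 * (LBINT r:{a..b}. r ^ (d - 1) * ((dphi r)\<^sup>2 + c r * (phi r)\<^sup>2))
       + ((1 + \<theta>) * (1 + 1 / \<theta>) + (1 + 1 / \<theta>) * LD) * K0 * S"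
proof -
  define w where "w r = r ^ (d - 1)" for r :: real
  define k where "k = (phi b - phi a) / (b - a)"
  define l where "l r = phi a + k * (r - a)" for r
  define psi where "psi r = phi r - l r" for r
  define dpsi where "dpsi r = dphi r - k" for r
  have LD0: "0 \<le> LD" unfolding LD_def by (rule lambda_D_nonneg)
  have i1: "set_integrable lborel {a..b} dphi" and i2: "set_integrable lborel {a..b} (\<lambda>t. (dphi t)\<^sup>2)"
    using H unfolding H1_pair_def by blast+
  have pc: "continuous_on {a..b} phi" by (rule H1_cont[OF H])
  have wc: "continuous_on {a..b} w" unfolding w_def by (intro continuous_intros)
  have lc: "continuous_on {a..b} l" unfolding l_def by (intro continuous_intros)
  have w01: "0 \<le> w r" "w r \<le> 1" if "r \<in> {a..b}" for r
    using that a0 b1 unfolding w_def by (auto intro: power_le_one)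
  have c0: "0 \<le> c r" if "r \<in> {a..b}" for r using bspec[OF cpos that] by simp
  have S0: "0 \<le> S" unfolding S_def by simp
  have K00: "0 \<le> K0" unfolding K0_def using Cm0 by simp
  have idpsi: "set_integrable lborel {a..b} dpsi"
    unfolding dpsi_def by (rule set_integral_diff(1)[OF i1 set_integrable_const_Icc])
  have dpsi_sq: "(\<lambda>r. (dpsi r)\<^sup>2) = (\<lambda>r. (dphi r)\<^sup>2 + (- 2 * k) * dphi r + k\<^sup>2)"
    unfolding dpsi_def by (auto simp: power2_eq_square algebra_simps fun_eq_iff)
  have idpsi2: "set_integrable lborel {a..b} (\<lambda>r. (dpsi r)\<^sup>2)"
    unfolding dpsi_sq
    by (intro set_integral_add(1) i2 set_integrable_mult_right i1 set_integrable_const_Icc)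
  have H10: "H10_pair a b psi dpsi"
    unfolding H10_pair_def H1_pair_def
  proof (intro conjI ballI idpsi idpsi2)
    fix x assume x: "x \<in> {a..b}"
    have "(LBINT t:{a..x}. dpsi t) = (LBINT t:{a..x}. dphi t) - (LBINT t:{a..x}. k)"
      unfolding dpsi_def using H1_int_sub(1)[OF H, of a x] x
      by (intro set_integral_diff(2) set_integrable_const_Icc) auto
    also have "\<dots> = (phi x - phi a) - (x - a) * k"
      using H1_diff[OF H, of a x] x set_integral_const_Icc[of a x k] by simp
    finally show "psi x = psi a + (LBINT t:{a..x}. dpsi t)"
      unfolding psi_def l_def by (simp add: algebra_simps)
  next
    show "psi a = 0" unfolding psi_def l_def by simp
    show "psi b = 0" unfolding psi_def l_def k_def using ab by simp
  qed
  have psic: "continuous_on {a..b} psi" unfolding psi_def using pc lc by (intro continuous_intros)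
  define Nphi where "Nphi = (LBINT r:{a..b}. w r * (phi r)\<^sup>2)"
  define Qphi where "Qphi = (LBINT r:{a..b}. w r * ((dphi r)\<^sup>2 + c r * (phi r)\<^sup>2))"
  define Npsi where "Npsi = (LBINT r:{a..b}. w r * (psi r)\<^sup>2)"
  define Qpsi where "Qpsi = (LBINT r:{a..b}. w r * ((dpsi r)\<^sup>2 + c r * (psi r)\<^sup>2))"
  define Nl where "Nl = (LBINT r:{a..b}. w r * (l r)\<^sup>2)"
  define Ql where "Ql = (LBINT r:{a..b}. w r * (k\<^sup>2 + c r * (l r)\<^sup>2))"
  have cc: "continuous_on {a..b} c" by (rule ccont)
  have iNphi: "set_integrable lborel {a..b} (\<lambda>r. w r * (phi r)\<^sup>2)"
    by (intro cont_integrable continuous_intros wc pc)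
  have iNpsi: "set_integrable lborel {a..b} (\<lambda>r. w r * (psi r)\<^sup>2)"
    by (intro cont_integrable continuous_intros wc psic)
  have iNl: "set_integrable lborel {a..b} (\<lambda>r. w r * (l r)\<^sup>2)"
    by (intro cont_integrable continuous_intros wc lc)
  have iQl: "set_integrable lborel {a..b} (\<lambda>r. w r * (k\<^sup>2 + c r * (l r)\<^sup>2))"
    by (intro cont_integrable continuous_intros wc lc cc)
  have iQ: "set_integrable lborel {a..b} (\<lambda>r. w r * ((g r)\<^sup>2 + c r * (f r)\<^sup>2))"
    if "set_integrable lborel {a..b} (\<lambda>r. (g r)\<^sup>2)" "continuous_on {a..b} f" for f g :: "real \<Rightarrow> real"
  proof -
    have "(\<lambda>r. w r * ((g r)\<^sup>2 + c r * (f r)\<^sup>2)) = (\<lambda>r. w r * (g r)\<^sup>2 + w r * c r * (f r)\<^sup>2)"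
      by (simp add: algebra_simps fun_eq_iff)
    moreover have "set_integrable lborel {a..b} (\<lambda>r. w r * (g r)\<^sup>2)"
      by (rule cont_mult_integrable[OF wc that(1)])
    moreover have "set_integrable lborel {a..b} (\<lambda>r. w r * c r * (f r)\<^sup>2)"
      by (intro cont_integrable continuous_intros wc cc that(2))
    ultimately show ?thesis by (simp add: set_integral_add(1))
  qed
  have iQphi: "set_integrable lborel {a..b} (\<lambda>r. w r * ((dphi r)\<^sup>2 + c r * (phi r)\<^sup>2))"
    by (rule iQ[OF i2 pc])
  have iQpsi: "set_integrable lborel {a..b} (\<lambda>r. w r * ((dpsi r)\<^sup>2 + c r * (psi r)\<^sup>2))"
    by (rule iQ[OF idpsi2 psic])
  have D: "LD * Npsi \<le> Qpsi"
    unfolding LD_def Npsi_def Qpsi_def w_def by (rule dirichlet_ineq[OF H10])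
  have Qc: "Qpsi \<le> (1 + \<theta>) * Qphi + (1 + 1 / \<theta>) * Ql"
  proof -
    have "Qpsi \<le> (LBINT r:{a..b}. (1 + \<theta>) * (w r * ((dphi r)\<^sup>2 + c r * (phi r)\<^sup>2)) + (1 + 1 / \<theta>) * (w r * (k\<^sup>2 + c r * (l r)\<^sup>2)))"
      unfolding Qpsi_def
    proof (rule set_integral_mono[OF iQpsi])
      show "set_integrable lborel {a..b} (\<lambda>r. (1 + \<theta>) * (w r * ((dphi r)\<^sup>2 + c r * (phi r)\<^sup>2)) + (1 + 1 / \<theta>) * (w r * (k\<^sup>2 + c r * (l r)\<^sup>2)))"
        by (intro set_integral_add(1) set_integrable_mult_right iQphi iQl)
      fix r assume r: "r \<in> {a..b}"
      show "w r * ((dpsi r)\<^sup>2 + c r * (psi r)\<^sup>2) \<le> (1 + \<theta>) * (w r * ((dphi r)\<^sup>2 + c r * (phi r)\<^sup>2)) + (1 + 1 / \<theta>) * (w r * (k\<^sup>2 + c r * (l r)\<^sup>2))"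
        unfolding dpsi_def psi_def by (rule pw1[OF t w01(1)[OF r] c0[OF r]])
    qed
    also have "\<dots> = (1 + \<theta>) * Qphi + (1 + 1 / \<theta>) * Ql"
      unfolding Qphi_def Ql_def
      by (subst set_integral_add(2)) (auto intro!: set_integrable_mult_right iQphi iQl)
    finally show ?thesis .
  qed
  have Nc: "Nphi \<le> (1 + \<theta>) * Npsi + (1 + 1 / \<theta>) * Nl"
  proof -
    have "Nphi \<le> (LBINT r:{a..b}. (1 + \<theta>) * (w r * (psi r)\<^sup>2) + (1 + 1 / \<theta>) * (w r * (l r)\<^sup>2))"
      unfolding Nphi_def
    proof (rule set_integral_mono[OF iNphi])
      show "set_integrable lborel {a..b} (\<lambda>r. (1 + \<theta>) * (w r * (psi r)\<^sup>2) + (1 + 1 / \<theta>) * (w r * (l r)\<^sup>2))"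
        by (intro set_integral_add(1) set_integrable_mult_right iNpsi iNl)
      fix r assume r: "r \<in> {a..b}"
      have "phi r = psi r + l r" unfolding psi_def by simp
      then show "w r * (phi r)\<^sup>2 \<le> (1 + \<theta>) * (w r * (psi r)\<^sup>2) + (1 + 1 / \<theta>) * (w r * (l r)\<^sup>2)"
        using pw2[OF t w01(1)[OF r], of "psi r" "l r"] by simp
    qed
    also have "\<dots> = (1 + \<theta>) * Npsi + (1 + 1 / \<theta>) * Nl"
      unfolding Npsi_def Nl_def
      by (subst set_integral_add(2)) (auto intro!: set_integrable_mult_right iNpsi iNl)
    finally show ?thesis .
  qed
  have l2: "(l r)\<^sup>2 \<le> 2 * S" if r: "r \<in> {a..b}" for r
  proof -
    define s where "s = (r - a) / (b - a)"
    have s01: "0 \<le> s" "s \<le> 1" unfolding s_def using r ab by auto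
    have "l r = phi a + s * (phi b - phi a)" unfolding l_def k_def s_def by simp
    also have "\<dots> = (1 - s) * phi a + s * phi b" by (simp add: algebra_simps)
    finally have "l r = (1 - s) * phi a + s * phi b" .
    then have "(l r)\<^sup>2 \<le> 2 * ((1 - s) * phi a)\<^sup>2 + 2 * (s * phi b)\<^sup>2" using sq_sum_le by simp
    also have "\<dots> = 2 * ((1 - s)\<^sup>2 * (phi a)\<^sup>2) + 2 * (s\<^sup>2 * (phi b)\<^sup>2)" by (simp add: power_mult_distrib)
    also have "\<dots> \<le> 2 * (1 * (phi a)\<^sup>2) + 2 * (1 * (phi b)\<^sup>2)"
    proof -
      have "(1 - s)\<^sup>2 \<le> 1" "s\<^sup>2 \<le> 1" using s01 by (auto intro: power_le_one)
      then have "(1 - s)\<^sup>2 * (phi a)\<^sup>2 \<le> 1 * (phi a)\<^sup>2" "s\<^sup>2 * (phi b)\<^sup>2 \<le> 1 * (phi b)\<^sup>2"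
        by (intro mult_right_mono; simp)+
      then show ?thesis by simp
    qed
    finally show ?thesis unfolding S_def by simp
  qed
  have k2: "k\<^sup>2 \<le> 2 * S / (b - a)\<^sup>2"
  proof -
    have "(phi b - phi a)\<^sup>2 \<le> 2 * S" using sq_sum_le[of "phi b" "- phi a"] unfolding S_def by simp
    then show ?thesis unfolding k_def power_divide using ab by (intro divide_right_mono) auto
  qed
  have bal: "b - a \<le> 1" using a0 b1 by simp
  have Ql_le: "Ql \<le> K0 * S"
  proof -
    have "Ql \<le> (LBINT r:{a..b}. K0 * S)"
      unfolding Ql_def
    proof (rule set_integral_mono[OF iQl set_integrable_const_Icc])
      fix r assume r: "r \<in> {a..b}"
      have "c r * (l r)\<^sup>2 \<le> Cm * (2 * S)"
        using cmax r c0[OF r] l2[OF r] Cm0 by (intro mult_mono) auto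
      then have X: "k\<^sup>2 + c r * (l r)\<^sup>2 \<le> 2 * S / (b - a)\<^sup>2 + Cm * (2 * S)" using k2 by linarith
      have "0 \<le> k\<^sup>2 + c r * (l r)\<^sup>2" using c0[OF r] by simp
      then have "w r * (k\<^sup>2 + c r * (l r)\<^sup>2) \<le> 1 * (k\<^sup>2 + c r * (l r)\<^sup>2)"
        using w01[OF r] by (intro mult_right_mono) auto
      also have "\<dots> \<le> K0 * S" using X S0 unfolding K0_def by (simp add: algebra_simps add_divide_distrib)
      finally show "w r * (k\<^sup>2 + c r * (l r)\<^sup>2) \<le> K0 * S" .
    qed
    also have "\<dots> = (b - a) * (K0 * S)" using ab by (simp add: set_integral_const_Icc)
    also have "\<dots> \<le> 1 * (K0 * S)" using bal K00 S0 by (intro mult_right_mono) auto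
    finally show ?thesis by simp
  qed
  have Nl_le: "Nl \<le> K0 * S"
  proof -
    have "Nl \<le> (LBINT r:{a..b}. K0 * S)"
      unfolding Nl_def
    proof (rule set_integral_mono[OF iNl set_integrable_const_Icc])
      fix r assume r: "r \<in> {a..b}"
      have "w r * (l r)\<^sup>2 \<le> 1 * (l r)\<^sup>2" using w01[OF r] by (intro mult_right_mono) auto
      also have "\<dots> \<le> 2 * S" using l2[OF r] by simp
      also have "\<dots> \<le> K0 * S" using S0 Cm0 ab unfolding K0_def by (intro mult_right_mono) auto
      finally show "w r * (l r)\<^sup>2 \<le> K0 * S" .
    qed
    also have "\<dots> = (b - a) * (K0 * S)" using ab by (simp add: set_integral_const_Icc)
    also have "\<dots> \<le> 1 * (K0 * S)" using bal K00 S0 by (intro mult_right_mono) auto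
    finally show ?thesis by simp
  qed
  have t1: "0 \<le> 1 + 1 / \<theta>" "0 \<le> 1 + \<theta>" using t by auto
  have "LD * Nphi \<le> LD * ((1 + \<theta>) * Npsi + (1 + 1 / \<theta>) * Nl)" using Nc LD0 by (rule mult_left_mono)
  also have "\<dots> = (1 + \<theta>) * (LD * Npsi) + (1 + 1 / \<theta>) * LD * Nl" by (simp add: algebra_simps)
  also have "\<dots> \<le> (1 + \<theta>) * Qpsi + (1 + 1 / \<theta>) * LD * (K0 * S)"
  proof -
    have "(1 + \<theta>) * (LD * Npsi) \<le> (1 + \<theta>) * Qpsi" by (rule mult_left_mono[OF D t1(2)])
    moreover have "(1 + 1 / \<theta>) * LD * Nl \<le> (1 + 1 / \<theta>) * LD * (K0 * S)"
      using Nl_le t1 LD0 by (intro mult_left_mono) auto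
    ultimately show ?thesis by linarith
  qed
  also have "\<dots> \<le> (1 + \<theta>) * ((1 + \<theta>) * Qphi + (1 + 1 / \<theta>) * (K0 * S)) + (1 + 1 / \<theta>) * LD * (K0 * S)"
  proof -
    have "(1 + 1 / \<theta>) * Ql \<le> (1 + 1 / \<theta>) * (K0 * S)" by (rule mult_left_mono[OF Ql_le t1(1)])
    then have "Qpsi \<le> (1 + \<theta>) * Qphi + (1 + 1 / \<theta>) * (K0 * S)" using Qc by linarith
    then have "(1 + \<theta>) * Qpsi \<le> (1 + \<theta>) * ((1 + \<theta>) * Qphi + (1 + 1 / \<theta>) * (K0 * S))"
      by (rule mult_left_mono[OF _ t1(2)])
    then show ?thesis by linarith
  qed
  also have "\<dots> = (1 + \<theta>)\<^sup>2 * Qphi + ((1 + \<theta>) * (1 + 1 / \<theta>) + (1 + 1 / \<theta>) * LD) * K0 * S"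
    by (simp add: power2_eq_square algebra_simps)
  finally show ?thesis unfolding Nphi_def Qphi_def w_def .
qed

end


lemma final_arith:
  fixes LD N v Q X \<theta> \<epsilon> :: real
  assumes LD: "0 \<le> LD" and N: "0 \<le> N" "N \<le> 1" and t: "0 < \<theta>"
    and v: "LD * (1 - N) + Q \<le> v" and D: "LD * N \<le> (1 + \<theta>)\<^sup>2 * Q + X"
    and X: "0 \<le> X" "X \<le> \<epsilon> / 2" and th: "2 * \<theta> * LD \<le> \<epsilon> / 2"
  shows "LD - \<epsilon> \<le> v"
proof -
  define T where "T = (1 + \<theta>)\<^sup>2"
  have T1: "1 \<le> T" unfolding T_def using t by (simp add: power2_eq_square algebra_simps)
  have Tp: "0 < T" using T1 by simp
  have Q: "(LD * N - X) / T \<le> Q" using D Tp unfolding T_def[symmetric] by (simp add: field_simps)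
  have "X / T \<le> X / 1" by (rule divide_left_mono[OF T1 X(1)]) (use Tp in simp)
  then have XT: "X / T \<le> X" by simp
  have iT: "1 - 1 / T \<le> 2 * \<theta>"
  proof -
    have "T * (1 - 2 * \<theta>) \<le> 1"
      unfolding T_def using t by (simp add: power2_eq_square algebra_simps)
    then have "1 - 2 * \<theta> \<le> 1 / T" using Tp by (simp add: field_simps)
    then show ?thesis by simp
  qed
  have "LD * N * (1 - 1 / T) \<le> LD * N * (2 * \<theta>)" using iT LD N by (intro mult_left_mono) auto
  also have "\<dots> \<le> LD * 1 * (2 * \<theta>)" using LD N t by (intro mult_right_mono mult_left_mono) auto
  finally have A: "LD * N * (1 - 1 / T) \<le> 2 * \<theta> * LD" by (simp add: mult.commute)
  have "v \<ge> LD * (1 - N) + (LD * N - X) / T" using v Q by linarith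
  moreover have "LD * (1 - N) + (LD * N - X) / T = LD - LD * N * (1 - 1 / T) - X / T"
    using Tp by (simp add: field_simps)
  ultimately show ?thesis using A XT X th by linarith
qed

lemma outer_split:
  fixes phi dphi m c :: "real \<Rightarrow> real" and a b s LD :: real and d :: nat
  assumes a0: "0 < a" and ab: "a < b" and b1: "b < 1" and mz: "\<forall>r\<in>{a..b}. m r = 0"
    and cbig: "\<forall>r\<in>{0..a} \<union> {b..1}. LD < c r"
    and i1: "set_integrable lborel {0..1} (\<lambda>r. r ^ (d - 1) * exp (2 * s * m r) * (phi r)\<^sup>2)"
    and n1: "(LBINT r:{0..1}. r ^ (d - 1) * exp (2 * s * m r) * (phi r)\<^sup>2) = 1"
    and iE: "set_integrable lborel {0..1} (\<lambda>r. r ^ (d - 1) * exp (2 * s * m r) * ((dphi r)\<^sup>2 + c r * (phi r)\<^sup>2))"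
    and iN: "set_integrable lborel {a..b} (\<lambda>r. r ^ (d - 1) * (phi r)\<^sup>2)"
    and iQ: "set_integrable lborel {a..b} (\<lambda>r. r ^ (d - 1) * ((dphi r)\<^sup>2 + c r * (phi r)\<^sup>2))"
  shows "LD * (1 - (LBINT r:{a..b}. r ^ (d - 1) * (phi r)\<^sup>2)) + (LBINT r:{a..b}. r ^ (d - 1) * ((dphi r)\<^sup>2 + c r * (phi r)\<^sup>2))
     \<le> (LBINT r:{0..1}. r ^ (d - 1) * exp (2 * s * m r) * ((dphi r)\<^sup>2 + c r * (phi r)\<^sup>2))"
proof -
  define Nin where "Nin = (LBINT r:{a..b}. r ^ (d - 1) * (phi r)\<^sup>2)"
  define Qin where "Qin = (LBINT r:{a..b}. r ^ (d - 1) * ((dphi r)\<^sup>2 + c r * (phi r)\<^sup>2))"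
  define H where "H r = r ^ (d - 1) * ((dphi r)\<^sup>2 + c r * (phi r)\<^sup>2) - LD * (r ^ (d - 1) * (phi r)\<^sup>2)" for r
  define G where "G r = LD * (r ^ (d - 1) * exp (2 * s * m r) * (phi r)\<^sup>2) + indicator {a..b} r * H r" for r
  have sub: "{a..b} \<subseteq> {0..1}" using a0 b1 by auto
  have iH: "set_integrable lborel {a..b} H" unfolding H_def
    by (intro set_integral_diff(1) iQ set_integrable_mult_right iN)
  have "(LBINT r:{a..b}. H r) = Qin - (LBINT r:{a..b}. LD * (r ^ (d - 1) * (phi r)\<^sup>2))"
    unfolding H_def Qin_def by (rule set_integral_diff(2)[OF iQ set_integrable_mult_right[OF iN]])
  then have intH: "(LBINT r:{a..b}. H r) = Qin - LD * Nin" unfolding Nin_def by simp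
  have iG: "set_integrable lborel {0..1} G" unfolding G_def
    by (intro set_integral_add(1) set_integrable_mult_right i1 indicator_integrable(1)[OF iH sub])
  have "(LBINT r:{0..1}. G r) = (LBINT r:{0..1}. LD * (r ^ (d - 1) * exp (2 * s * m r) * (phi r)\<^sup>2))
      + (LBINT r:{0..1}. indicator {a..b} r * H r)"
    unfolding G_def by (rule set_integral_add(2)[OF set_integrable_mult_right[OF i1] indicator_integrable(1)[OF iH sub]])
  then have intG: "(LBINT r:{0..1}. G r) = LD + (Qin - LD * Nin)"
    unfolding indicator_integrable(2)[OF iH sub] intH set_integral_mult_right n1 by simp
  have "(LBINT r:{0..1}. G r) \<le> (LBINT r:{0..1}. r ^ (d - 1) * exp (2 * s * m r) * ((dphi r)\<^sup>2 + c r * (phi r)\<^sup>2))"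
  proof (rule set_integral_mono[OF iG iE])
    fix r :: real assume r: "r \<in> {0..1}"
    show "G r \<le> r ^ (d - 1) * exp (2 * s * m r) * ((dphi r)\<^sup>2 + c r * (phi r)\<^sup>2)"
    proof (cases "r \<in> {a..b}")
      case True
      then have "m r = 0" using mz by blast
      then show ?thesis using True unfolding G_def H_def by (simp add: algebra_simps)
    next
      case False
      then have "r \<in> {0..a} \<union> {b..1}" using r by auto
      then have cr: "LD < c r" using cbig by blast
      have rho: "0 \<le> r ^ (d - 1) * exp (2 * s * m r)" using r by simp
      have "LD * (phi r)\<^sup>2 \<le> c r * (phi r)\<^sup>2" using cr by (intro mult_right_mono) auto
      then have "LD * (phi r)\<^sup>2 \<le> (dphi r)\<^sup>2 + c r * (phi r)\<^sup>2" by (smt (verit) zero_le_power2)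
      then have "r ^ (d - 1) * exp (2 * s * m r) * (LD * (phi r)\<^sup>2) \<le>
          r ^ (d - 1) * exp (2 * s * m r) * ((dphi r)\<^sup>2 + c r * (phi r)\<^sup>2)"
        using rho by (rule mult_left_mono)
      then show ?thesis using False unfolding G_def by (simp add: algebra_simps)
    qed
  qed
  then show ?thesis using intG unfolding Nin_def[symmetric] Qin_def[symmetric] by (simp add: algebra_simps)
qed


lemma rho_lower:
  fixes s \<delta> L r :: real and m :: "real \<Rightarrow> real" and d :: nat
  assumes "0 \<le> s" "0 < \<delta>" "\<delta> \<le> r" "L \<le> m r"
  shows "\<delta> ^ (d - 1) * exp (2 * s * L) \<le> r ^ (d - 1) * exp (2 * s * m r)"
proof (rule mult_mono)
  show "\<delta> ^ (d - 1) \<le> r ^ (d - 1)" using assms by (intro power_mono) auto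
  have "2 * s * L \<le> 2 * s * m r" using assms by (intro mult_left_mono) auto
  then show "exp (2 * s * L) \<le> exp (2 * s * m r)" by simp
qed (use assms in auto)

locale bset = seqs \<delta> \<alpha> \<beta> l a
  for \<delta> \<alpha> \<beta> :: real and l :: nat and a :: real +
  fixes b h \<nu> :: real and m :: "real \<Rightarrow> real"
  assumes \<delta>0: "0 < \<delta>" and \<delta>a: "\<delta> < a" and h0: "0 < h" and h\<alpha>: "h < \<alpha>" and \<nu>1: "1 < \<nu>"
    and ab1: "a + b = 1" and ab: "a < b"
    and msym: "\<forall>r\<in>{0..1}. m r = m (1 - r)" and mz: "\<forall>r\<in>{a..b}. m r = 0"
    and mtil: "\<forall>r\<in>{\<delta>..<a}. tilde_m \<delta> h \<alpha> \<beta> \<nu> l r \<le> m r"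
begin

lemma h1: "h < 1" using h0 h\<alpha> \<alpha>\<beta> \<beta>1 by simp

lemma a_half: "a < 1 / 2" using ab1 ab by simp

lemma y_ge: "\<delta> \<le> y k" using x_ge_delta[of k] x_lt_y[of k] by simp

lemma m_low:
  assumes r: "y k \<le> r" "r \<le> a"
  shows "- (h ^ Suc k) \<le> m r"
proof (cases "r = a")
  case True
  then have "m r = 0" using mz ab by auto
  then show ?thesis using h0 by simp
next
  case False
  then have ra: "r < a" using r by simp
  have "r \<in> {\<delta>..<a}" using ra r y_ge[of k] by auto
  then have "tilde_m \<delta> h \<alpha> \<beta> \<nu> l r \<le> m r" using mtil by blast
  moreover have "tilde_m \<delta> h \<alpha> \<beta> \<nu> l r = tilde_m_left \<delta> h \<alpha> \<beta> \<nu> l r"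
    unfolding tilde_m_def using ra a_half by simp
  moreover have "- (h ^ Suc k) \<le> tilde_m_left \<delta> h \<alpha> \<beta> \<nu> l r"
    using tml_lower[OF r(1) h0 h1] \<nu>1 by simp
  ultimately show ?thesis by simp
qed

lemma m_high:
  assumes r: "y k \<le> r" "r < x (Suc k)"
  shows "\<nu> * h ^ k \<le> m r"
proof -
  have ra: "r < a" using r x_lt_a[of "Suc k"] by simp
  have "r \<in> {\<delta>..<a}" using ra r y_ge[of k] by auto
  then have "tilde_m \<delta> h \<alpha> \<beta> \<nu> l r \<le> m r" using mtil by blast
  moreover have "tilde_m \<delta> h \<alpha> \<beta> \<nu> l r = tilde_m_left \<delta> h \<alpha> \<beta> \<nu> l r"
    unfolding tilde_m_def using ra a_half by simp
  moreover have "tilde_m_left \<delta> h \<alpha> \<beta> \<nu> l r = \<nu> * h ^ k" by (rule tml_pos[OF r])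
  ultimately show ?thesis by simp
qed

lemma bnd_algebra:
  fixes phie D M s :: real and k :: nat
  assumes M0: "0 \<le> M" and D: "D \<le> 2 * \<beta> ^ (Suc k + l) / (1 - \<beta>)"
    and est: "phie \<le> 4 / (\<delta> ^ (d - 1) * exp (2 * s * (\<nu> * h ^ k)) * (\<beta> ^ (Suc k + l) / 2))
                 + 2 * D * M / (\<delta> ^ (d - 1) * exp (2 * s * - (h ^ Suc k)))"
  shows "phie \<le> 8 / (\<delta> ^ (d - 1) * \<beta> ^ Suc l) * (exp (- 2 * s * \<nu> * h ^ k) / \<beta> ^ k)
      + 4 * \<beta> ^ Suc l * M / ((1 - \<beta>) * \<delta> ^ (d - 1)) * (\<beta> ^ k * exp (2 * s * h ^ Suc k))"
proof -
  have b0: "0 < \<beta>" using \<alpha>pos \<alpha>\<beta> by simp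
  have dp: "0 < \<delta> ^ (d - 1)" using \<delta>0 by simp
  have bsplit: "\<beta> ^ (Suc k + l) = \<beta> ^ k * \<beta> ^ Suc l" by (simp add: power_add[symmetric])
  have e1: "4 / (\<delta> ^ (d - 1) * exp (2 * s * (\<nu> * h ^ k)) * (\<beta> ^ (Suc k + l) / 2))
      = 8 / (\<delta> ^ (d - 1) * \<beta> ^ Suc l) * (exp (- 2 * s * \<nu> * h ^ k) / \<beta> ^ k)"
    unfolding bsplit using dp b0 by (simp add: exp_minus' field_simps)
  have W1p: "0 < \<delta> ^ (d - 1) * exp (2 * s * - (h ^ Suc k))" using dp by simp
  have "2 * D * M / (\<delta> ^ (d - 1) * exp (2 * s * - (h ^ Suc k)))
      \<le> 2 * (2 * \<beta> ^ (Suc k + l) / (1 - \<beta>)) * M / (\<delta> ^ (d - 1) * exp (2 * s * - (h ^ Suc k)))"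
    using D M0 W1p by (intro divide_right_mono mult_right_mono) auto
  also have "\<dots> = 4 * \<beta> ^ Suc l * M / ((1 - \<beta>) * \<delta> ^ (d - 1)) * (\<beta> ^ k * exp (2 * s * h ^ Suc k))"
    unfolding bsplit using dp b0 \<beta>1 by (simp add: exp_minus' field_simps)
  finally show ?thesis using est e1 by linarith
qed

lemma bnd_est:
  fixes phi dphi :: "real \<Rightarrow> real" and s M e :: real and k d :: nat
  assumes s0: "0 \<le> s" and M0: "0 \<le> M" and H: "H1_pair 0 1 phi dphi"
    and i1: "set_integrable lborel {0..1} (\<lambda>r. r ^ (d - 1) * exp (2 * s * m r) * (phi r)\<^sup>2)"
    and n1: "(LBINT r:{0..1}. r ^ (d - 1) * exp (2 * s * m r) * (phi r)\<^sup>2) \<le> 1"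
    and i2: "set_integrable lborel {0..1} (\<lambda>r. r ^ (d - 1) * exp (2 * s * m r) * (dphi r)\<^sup>2)"
    and n2: "(LBINT r:{0..1}. r ^ (d - 1) * exp (2 * s * m r) * (dphi r)\<^sup>2) \<le> M"
    and e: "e = a \<or> e = b"
  shows "(phi e)\<^sup>2 \<le> 8 / (\<delta> ^ (d - 1) * \<beta> ^ Suc l) * (exp (- 2 * s * \<nu> * h ^ k) / \<beta> ^ k)
      + 4 * \<beta> ^ Suc l * M / ((1 - \<beta>) * \<delta> ^ (d - 1)) * (\<beta> ^ k * exp (2 * s * h ^ Suc k))"
proof -
  define rho where "rho r = r ^ (d - 1) * exp (2 * s * m r)" for r
  define W1 where "W1 = \<delta> ^ (d - 1) * exp (2 * s * - (h ^ Suc k))"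
  define W2 where "W2 = \<delta> ^ (d - 1) * exp (2 * s * (\<nu> * h ^ k))"
  define L where "L = \<beta> ^ (Suc k + l)"
  have L0: "0 < L" unfolding L_def using \<alpha>pos \<alpha>\<beta> by simp
  have W10: "0 < W1" "0 < W2" unfolding W1_def W2_def using \<delta>0 by auto
  have D: "a - y k \<le> 2 * \<beta> ^ (Suc k + l) / (1 - \<beta>)" by (rule a_minus_y)
  have xs: "x (Suc k) = y k + L" unfolding L_def by (rule x_eq_y)
  have xa: "x (Suc k) < a" by (rule x_lt_a)
  have yk: "\<delta> \<le> y k" by (rule y_ge)
  have b1: "b = 1 - a" using ab1 by simp
  have a1: "a < 1" using a_half by simp
  have rho_nn: "\<forall>r\<in>{0..1}. 0 \<le> rho r" unfolding rho_def by auto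
  have i1': "set_integrable lborel {0..1} (\<lambda>r. rho r * (phi r)\<^sup>2)" using i1 unfolding rho_def .
  have i2': "set_integrable lborel {0..1} (\<lambda>r. rho r * (dphi r)\<^sup>2)" using i2 unfolding rho_def .
  have n1': "(LBINT r:{0..1}. rho r * (phi r)\<^sup>2) \<le> 1" using n1 unfolding rho_def .
  have n2': "(LBINT r:{0..1}. rho r * (dphi r)\<^sup>2) \<le> M" using n2 unfolding rho_def .
  have W1le: "W1 \<le> rho r" if "y k \<le> r" "r \<le> a" for r
    unfolding W1_def rho_def using yk that \<delta>0 s0 by (intro rho_lower m_low) auto
  have W2le: "W2 \<le> rho r" if "y k \<le> r" "r < x (Suc k)" for r
    unfolding W2_def rho_def using yk that \<delta>0 s0 by (intro rho_lower m_high) auto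
  have W1le': "W1 \<le> rho r" if "b \<le> r" "r \<le> 1 - y k" for r
  proof -
    have "r \<in> {0..1}" using that yk \<delta>0 \<delta>a ab by auto
    then have "m r = m (1 - r)" using msym by blast
    moreover have "- (h ^ Suc k) \<le> m (1 - r)" using that b1 by (intro m_low) auto
    ultimately show ?thesis unfolding W1_def rho_def using that \<delta>0 \<delta>a ab s0 by (intro rho_lower) auto
  qed
  have W2le': "W2 \<le> rho r" if "1 - y k - L / 2 \<le> r" "r \<le> 1 - y k" for r
  proof -
    have "r \<in> {0..1}" using that yk \<delta>0 xs xa L0 a_half by auto
    then have "m r = m (1 - r)" using msym by blast
    moreover have "\<nu> * h ^ k \<le> m (1 - r)" using that xs L0 by (intro m_high) auto
    ultimately show ?thesis unfolding W2_def rho_def using that \<delta>0 \<delta>a ab s0 xs xa L0 b1 by (intro rho_lower) auto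
  qed
  have main: "(phi e)\<^sup>2 \<le> 4 / (W2 * (L / 2)) + 2 * (a - y k) * M / W1"
    using e
  proof
    assume ea: "e = a"
    have "(phi e)\<^sup>2 \<le> 4 / (W2 * (y k + L / 2 - y k)) + 2 * (a - y k) * M / W1"
      unfolding ea
    proof (rule key_est[OF H, where rho=rho])
      show "0 \<le> y k" using yk \<delta>0 by simp
      show "y k \<le> y k" "y k \<le> a" "a \<le> a" using y_lt_a[of k] by auto
      show "y k < y k + L / 2" using L0 by simp
      show "y k + L / 2 \<le> a" using xs xa L0 by simp
      show "a \<le> 1" using a1 by simp
      show "0 < W1" "0 < W2" by (fact W10)+
      show "\<forall>r\<in>{y k..a}. W1 \<le> rho r" using W1le by auto
      show "\<forall>r\<in>{y k..y k + L / 2}. W2 \<le> rho r" using W2le xs L0 by auto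
    qed (fact rho_nn i1' n1' i2' n2')+
    then show ?thesis by simp
  next
    assume eb: "e = b"
    have "(phi e)\<^sup>2 \<le> 4 / (W2 * ((1 - y k) - (1 - y k - L / 2))) + 2 * ((1 - y k) - b) * M / W1"
      unfolding eb
    proof (rule key_est[OF H, where rho=rho])
      show "0 \<le> b" using ab a_half \<delta>0 \<delta>a by simp
      show "b \<le> 1 - y k - L / 2" using xs xa L0 b1 by simp
      show "1 - y k - L / 2 < 1 - y k" using L0 by simp
      show "1 - y k \<le> 1 - y k" "b \<le> b" by auto
      show "b \<le> 1 - y k" using xs xa L0 b1 by simp
      show "1 - y k \<le> 1" using yk \<delta>0 by simp
      show "0 < W1" "0 < W2" by (fact W10)+
      show "\<forall>r\<in>{b..1 - y k}. W1 \<le> rho r" using W1le' by auto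
      show "\<forall>r\<in>{1 - y k - L / 2..1 - y k}. W2 \<le> rho r" using W2le' by auto
    qed (fact rho_nn i1' n1' i2' n2')+
    then show ?thesis using b1 by simp
  qed
  show ?thesis
    by (rule bnd_algebra[OF M0 D]) (use main in \<open>simp add: W1_def W2_def L_def\<close>)
qed

lemma boundary_small:
  fixes M \<eta> :: real and d :: nat
  assumes M0: "0 \<le> M" and \<eta>: "0 < \<eta>"
  shows "\<exists>S0\<ge>0. \<forall>s\<ge>S0. \<forall>phi dphi. H1_pair 0 1 phi dphi \<and>
      set_integrable lborel {0..1} (\<lambda>r. r ^ (d - 1) * exp (2 * s * m r) * (phi r)\<^sup>2) \<and>
      (LBINT r:{0..1}. r ^ (d - 1) * exp (2 * s * m r) * (phi r)\<^sup>2) \<le> 1 \<and>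
      set_integrable lborel {0..1} (\<lambda>r. r ^ (d - 1) * exp (2 * s * m r) * (dphi r)\<^sup>2) \<and>
      (LBINT r:{0..1}. r ^ (d - 1) * exp (2 * s * m r) * (dphi r)\<^sup>2) \<le> M
      \<longrightarrow> (phi a)\<^sup>2 + (phi b)\<^sup>2 \<le> \<eta>"
proof -
  have b0: "0 < \<beta>" using \<alpha>pos \<alpha>\<beta> by simp
  obtain \<gamma> C where \<gamma>: "0 < \<gamma>" and CK: "\<forall>K::nat. \<exists>S0. \<forall>s\<ge>S0. \<exists>k\<ge>K.
           exp (- 2 * s * \<nu> * h ^ k) / \<beta> ^ k \<le> C * exp (- \<gamma> * k) \<and>
           \<beta> ^ k * exp (2 * s * h ^ Suc k) \<le> C * exp (- \<gamma> * k)"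
    using choose_k[OF h0 h1 b0 \<beta>1 \<nu>1] by blast
  define Cp where "Cp = max C 1"
  have Cp: "1 \<le> Cp" "C \<le> Cp" unfolding Cp_def by auto
  define c1 where "c1 = 8 / (\<delta> ^ (d - 1) * \<beta> ^ Suc l)"
  define c2 where "c2 = 4 * \<beta> ^ Suc l * M / ((1 - \<beta>) * \<delta> ^ (d - 1))"
  have c12: "0 \<le> c1" "0 \<le> c2" unfolding c1_def c2_def using \<delta>0 b0 \<beta>1 M0 by auto
  define Z where "Z = 2 * (c1 + c2 + 1) * Cp"
  have Z0: "0 < Z" unfolding Z_def using c12 Cp by simp
  obtain K :: nat where K: "ln (Z / \<eta>) / \<gamma> < K" using reals_Archimedean2 by blast
  have eK: "Z * exp (- \<gamma> * K) \<le> \<eta>"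
  proof -
    have "ln (Z / \<eta>) < \<gamma> * K" using K \<gamma> by (simp add: field_simps)
    then have "- \<gamma> * K < ln (\<eta> / Z)" using Z0 \<eta> by (simp add: ln_div)
    then have "exp (- \<gamma> * K) < \<eta> / Z" using Z0 \<eta>
      by (metis divide_pos_pos exp_less_cancel_iff exp_ln)
    then show ?thesis using Z0 by (simp add: field_simps)
  qed
  obtain S0 where S0: "\<forall>s\<ge>S0. \<exists>k\<ge>K.
           exp (- 2 * s * \<nu> * h ^ k) / \<beta> ^ k \<le> C * exp (- \<gamma> * k) \<and>
           \<beta> ^ k * exp (2 * s * h ^ Suc k) \<le> C * exp (- \<gamma> * k)" using CK by blast
  show ?thesis
  proof (intro exI[of _ "max S0 0"] conjI allI impI)
    fix s phi dphi
    assume s: "max S0 0 \<le> s"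
    assume A: "H1_pair 0 1 phi dphi \<and>
      set_integrable lborel {0..1} (\<lambda>r. r ^ (d - 1) * exp (2 * s * m r) * (phi r)\<^sup>2) \<and>
      (LBINT r:{0..1}. r ^ (d - 1) * exp (2 * s * m r) * (phi r)\<^sup>2) \<le> 1 \<and>
      set_integrable lborel {0..1} (\<lambda>r. r ^ (d - 1) * exp (2 * s * m r) * (dphi r)\<^sup>2) \<and>
      (LBINT r:{0..1}. r ^ (d - 1) * exp (2 * s * m r) * (dphi r)\<^sup>2) \<le> M"
    obtain k where k: "K \<le> k" and E1: "exp (- 2 * s * \<nu> * h ^ k) / \<beta> ^ k \<le> C * exp (- \<gamma> * k)"
      and E2: "\<beta> ^ k * exp (2 * s * h ^ Suc k) \<le> C * exp (- \<gamma> * k)" using S0 s by force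
    have ek: "exp (- \<gamma> * k) \<le> exp (- \<gamma> * K)" using k \<gamma> by simp
    have "C * exp (- \<gamma> * k) \<le> Cp * exp (- \<gamma> * k)" using Cp by (intro mult_right_mono) auto
    also have "\<dots> \<le> Cp * exp (- \<gamma> * K)" using ek Cp by (intro mult_left_mono) auto
    finally have CB: "C * exp (- \<gamma> * k) \<le> Cp * exp (- \<gamma> * K)" .
    define B where "B = Cp * exp (- \<gamma> * K)"
    have one: "(phi e)\<^sup>2 \<le> (c1 + c2) * B" if e: "e = a \<or> e = b" for e
    proof -
      have "(phi e)\<^sup>2 \<le> c1 * (exp (- 2 * s * \<nu> * h ^ k) / \<beta> ^ k) + c2 * (\<beta> ^ k * exp (2 * s * h ^ Suc k))"
        unfolding c1_def c2_def using A s M0 e by (intro bnd_est[where d=d]) auto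
      also have "\<dots> \<le> c1 * B + c2 * B"
        using E1 E2 CB c12 unfolding B_def by (intro add_mono mult_left_mono) auto
      finally show ?thesis by (simp add: algebra_simps)
    qed
    have "(phi a)\<^sup>2 + (phi b)\<^sup>2 \<le> 2 * ((c1 + c2) * B)" using one[of a] one[of b] by simp
    also have "\<dots> \<le> Z * exp (- \<gamma> * K)"
      unfolding Z_def B_def using Cp by (simp add: algebra_simps)
    also have "\<dots> \<le> \<eta>" by (rule eK)
    finally show "(phi a)\<^sup>2 + (phi b)\<^sup>2 \<le> \<eta>" .
  qed simp
qed

end


theorem proposition3p2:
  fixes d :: nat and a b :: real and m c :: "real \<Rightarrow> real"
  assumes d: "d \<ge> 1"
    and ab: "0 < a" "a < b" "b < 1" "a + b = 1"
    and m_C1: "C1_on {0..1} m"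
    and m_nonconst: "\<not> (\<exists>k. \<forall>x\<in>{0..1}. m x = k)"
    and c_cont: "continuous_on {0..1} c"
    and H1_sym: "\<forall>r\<in>{0..1}. m r = m (1 - r)"
    and H1_zero: "\<forall>r\<in>{a..b}. m r = 0"
    and H2_pos: "\<forall>r\<in>{0..1}. c r > 0"
    and H2_big: "\<forall>r\<in>{0..a} \<union> {b..1}. c r > lambda_D d c a b"
    and mS: "m \<in> S_D a b"
  shows "((\<lambda>s. lambda_s d m c s) \<longlongrightarrow> lambda_D d c a b) at_top"
proof -
  define LD where "LD = lambda_D d c a b"
  have ab0: "0 < a" "a < b" "b < 1" "a + b = 1" using ab by auto
  obtain m' \<delta> h \<alpha> \<beta> \<nu> and l :: nat where
    C1: "C1_deriv_on {0..1} m m'" and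
    pars: "0 < \<delta>" "\<delta> < a" "0 < h" "h < \<alpha>" "\<alpha> < \<beta>" "\<beta> < 1" "1 < \<nu>" and
    sums: "(\<lambda>i. \<alpha> ^ (Suc i + l) + \<beta> ^ (Suc i + l)) sums (a - \<delta>)" and
    mtil0: "\<forall>r \<in> {\<delta>..<a} \<union> {b<..1 - \<delta>}. m r \<ge> tilde_m \<delta> h \<alpha> \<beta> \<nu> l r"
    using mS unfolding S_D_def by blast
  have mcont: "continuous_on {0..1} m"
  proof -
    have "\<forall>x\<in>{0..1}. (m has_real_derivative m' x) (at x within {0..1})"
      using C1 unfolding C1_deriv_on_def by blast
    then show ?thesis unfolding continuous_on_eq_continuous_within
      using DERIV_continuous by blast
  qed
  have mtil: "\<forall>r\<in>{\<delta>..<a}. tilde_m \<delta> h \<alpha> \<beta> \<nu> l r \<le> m r" using mtil0 by blast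
  have pos\<alpha>: "0 < \<alpha>" using pars by simp
  interpret bset \<delta> \<alpha> \<beta> l a b h \<nu> m
    by (rule bset.intro[OF seqs.intro[OF pos\<alpha> pars(5) pars(6) sums] bset_axioms.intro[OF pars(1) pars(2) pars(3) pars(4) pars(7) ab0(4) ab0(2) H1_sym H1_zero mtil]])
  have ccab: "continuous_on {a..b} c" by (rule continuous_on_subset[OF c_cont]) (use ab0 in auto)
  interpret dir a b c d
    using ab0 H2_pos ccab by unfold_locales auto
  have LD0: "0 \<le> LD" unfolding LD_def by (rule lambda_D_nonneg)
  have upper: "lambda_s d m c s \<le> LD" for s
    unfolding LD_def using ab0 H1_zero H2_pos c_cont by (intro upper_bound) auto
  have LSne: "LSet d m c s \<noteq> {}" for s
  proof -
    have "DSet d c a b \<subseteq> LSet d m c s"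
      unfolding DSet_def using ext_in_LSet[OF ab0(1) ab0(2) ab0(3) H1_zero] by blast
    then show ?thesis using DSet_ne by blast
  qed
  obtain x0 where x0: "x0 \<in> {0..1}" "\<forall>y\<in>{0..1}. c y \<le> c x0"
    using continuous_attains_sup[OF compact_Icc _ c_cont] by auto
  define Cm where "Cm = c x0"
  have Cm0: "0 \<le> Cm" unfolding Cm_def using bspec[OF H2_pos x0(1)] by simp
  have cmax: "\<forall>r\<in>{a..b}. c r \<le> Cm" unfolding Cm_def using x0 ab0 by auto
  have lower: "\<exists>S. \<forall>s\<ge>S. LD - \<epsilon> \<le> lambda_s d m c s" if \<epsilon>: "0 < \<epsilon>" for \<epsilon>
  proof -
    define \<theta> where "\<theta> = \<epsilon> / (4 * (LD + 1))"
    have \<theta>0: "0 < \<theta>" unfolding \<theta>_def using \<epsilon> LD0 by simp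
    define M where "M = LD + 1"
    have M0: "0 \<le> M" unfolding M_def using LD0 by simp
    define K0 where "K0 = 2 / (b - a)\<^sup>2 + 2 * Cm + 2"
    have K00: "0 < K0" unfolding K0_def using Cm0 by (simp add: add_nonneg_pos)
    define R where "R = ((1 + \<theta>) * (1 + 1 / \<theta>) + (1 + 1 / \<theta>) * LD) * K0"
    have R0: "0 < R" unfolding R_def using \<theta>0 LD0 K00
      by (intro mult_pos_pos add_pos_nonneg) auto
    define \<eta> where "\<eta> = \<epsilon> / (2 * R)"
    have \<eta>0: "0 < \<eta>" unfolding \<eta>_def using \<epsilon> R0 by simp
    obtain S0 where S0: "0 \<le> S0" and S0b: "\<forall>s\<ge>S0. \<forall>phi dphi. H1_pair 0 1 phi dphi \<and>
      set_integrable lborel {0..1} (\<lambda>r. r ^ (d - 1) * exp (2 * s * m r) * (phi r)\<^sup>2) \<and>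
      (LBINT r:{0..1}. r ^ (d - 1) * exp (2 * s * m r) * (phi r)\<^sup>2) \<le> 1 \<and>
      set_integrable lborel {0..1} (\<lambda>r. r ^ (d - 1) * exp (2 * s * m r) * (dphi r)\<^sup>2) \<and>
      (LBINT r:{0..1}. r ^ (d - 1) * exp (2 * s * m r) * (dphi r)\<^sup>2) \<le> M
      \<longrightarrow> (phi a)\<^sup>2 + (phi b)\<^sup>2 \<le> \<eta>"
      using boundary_small[OF M0 \<eta>0, of d] by blast
    show ?thesis
    proof (intro exI[of _ S0] allI impI)
      fix s assume s: "S0 \<le> s"
      show "LD - \<epsilon> \<le> lambda_s d m c s"
        unfolding lambda_s_LSet
      proof (rule cInf_greatest[OF LSne])
        fix v assume "v \<in> LSet d m c s"
        then obtain phi dphi where v: "v = (LBINT r:{0..1}. r ^ (d - 1) * exp (2 * s * m r) * ((dphi r)\<^sup>2 + c r * (phi r)\<^sup>2))"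
          and H: "H1_pair 0 1 phi dphi"
          and n1: "(LBINT r:{0..1}. r ^ (d - 1) * exp (2 * s * m r) * (phi r)\<^sup>2) = 1"
          unfolding LSet_def by blast
        show "LD - \<epsilon> \<le> v"
        proof (cases "M \<le> v")
          case True then show ?thesis unfolding M_def using \<epsilon> by simp
        next
          case False
          then have vM: "v < M" by simp
          have pc: "continuous_on {0..1} phi" by (rule H1_cont[OF H])
          have rc: "continuous_on {0..1} (\<lambda>r. r ^ (d - 1) * exp (2 * s * m r))"
            by (intro continuous_intros mcont)
          have i2d: "set_integrable lborel {0..1} (\<lambda>t. (dphi t)\<^sup>2)" using H unfolding H1_pair_def by blast
          have i1: "set_integrable lborel {0..1} (\<lambda>r. r ^ (d - 1) * exp (2 * s * m r) * (phi r)\<^sup>2)"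
            by (intro cont_integrable continuous_intros mcont pc)
          have i2: "set_integrable lborel {0..1} (\<lambda>r. r ^ (d - 1) * exp (2 * s * m r) * (dphi r)\<^sup>2)"
            by (rule cont_mult_integrable[OF rc i2d])
          have i3: "set_integrable lborel {0..1} (\<lambda>r. r ^ (d - 1) * exp (2 * s * m r) * (c r * (phi r)\<^sup>2))"
            by (intro cont_integrable continuous_intros mcont pc c_cont)
          have eqE: "(\<lambda>r. r ^ (d - 1) * exp (2 * s * m r) * ((dphi r)\<^sup>2 + c r * (phi r)\<^sup>2)) =
              (\<lambda>r. r ^ (d - 1) * exp (2 * s * m r) * (dphi r)\<^sup>2 + r ^ (d - 1) * exp (2 * s * m r) * (c r * (phi r)\<^sup>2))"
            by (simp add: algebra_simps fun_eq_iff)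
          have iE: "set_integrable lborel {0..1} (\<lambda>r. r ^ (d - 1) * exp (2 * s * m r) * ((dphi r)\<^sup>2 + c r * (phi r)\<^sup>2))"
            unfolding eqE by (rule set_integral_add(1)[OF i2 i3])
          have vsplit: "v = (LBINT r:{0..1}. r ^ (d - 1) * exp (2 * s * m r) * (dphi r)\<^sup>2)
              + (LBINT r:{0..1}. r ^ (d - 1) * exp (2 * s * m r) * (c r * (phi r)\<^sup>2))"
            unfolding v eqE by (rule set_integral_add(2)[OF i2 i3])
          have "0 \<le> (LBINT r:{0..1}. r ^ (d - 1) * exp (2 * s * m r) * (c r * (phi r)\<^sup>2))"
          proof (rule set_int_nonneg)
            fix r :: real assume r: "r \<in> {0..1}"
            have "0 < c r" using H2_pos r by blast
            then show "0 \<le> r ^ (d - 1) * exp (2 * s * m r) * (c r * (phi r)\<^sup>2)" using r by simp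
          qed
          then have n2: "(LBINT r:{0..1}. r ^ (d - 1) * exp (2 * s * m r) * (dphi r)\<^sup>2) \<le> M"
            using vsplit vM by linarith
          define S where "S = (phi a)\<^sup>2 + (phi b)\<^sup>2"
          have n1': "(LBINT r:{0..1}. r ^ (d - 1) * exp (2 * s * m r) * (phi r)\<^sup>2) \<le> 1" using n1 by simp
          have S: "S \<le> \<eta>" unfolding S_def using S0b[rule_format, OF s, of phi dphi] H i1 n1' i2 n2 by blast
          have S00: "0 \<le> S" unfolding S_def by simp
          have Hab: "H1_pair a b phi dphi" using H1_restrict[OF H] ab0 by simp
          define Nin where "Nin = (LBINT r:{a..b}. r ^ (d - 1) * (phi r)\<^sup>2)"
          define Qin where "Qin = (LBINT r:{a..b}. r ^ (d - 1) * ((dphi r)\<^sup>2 + c r * (phi r)\<^sup>2))"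
          have IB: "LD * Nin \<le> (1 + \<theta>)\<^sup>2 * Qin + R * S"
            using inner_bound[OF _ cmax Cm0 Hab \<theta>0] ab0
            unfolding LD_def Nin_def Qin_def R_def K0_def S_def by (simp add: mult.assoc)
          have pcab: "continuous_on {a..b} phi" by (rule H1_cont[OF Hab])
          have i2ab: "set_integrable lborel {a..b} (\<lambda>t. (dphi t)\<^sup>2)" using Hab unfolding H1_pair_def by blast
          have iN: "set_integrable lborel {a..b} (\<lambda>r. r ^ (d - 1) * (phi r)\<^sup>2)"
            by (intro cont_integrable continuous_intros pcab)
          have eqQ: "(\<lambda>r. r ^ (d - 1) * ((dphi r)\<^sup>2 + c r * (phi r)\<^sup>2)) =
              (\<lambda>r. r ^ (d - 1) * (dphi r)\<^sup>2 + r ^ (d - 1) * (c r * (phi r)\<^sup>2))"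
            by (simp add: algebra_simps fun_eq_iff)
          have iQ: "set_integrable lborel {a..b} (\<lambda>r. r ^ (d - 1) * ((dphi r)\<^sup>2 + c r * (phi r)\<^sup>2))"
            unfolding eqQ
            by (intro set_integral_add(1) cont_mult_integrable[OF _ i2ab] cont_integrable continuous_intros pcab ccab)
          have OS: "LD * (1 - Nin) + Qin \<le> v"
            unfolding v Nin_def Qin_def LD_def
            by (rule outer_split[OF ab0(1) ab0(2) ab0(3) H1_zero H2_big i1 n1 iE iN iQ])
          have Nin0: "0 \<le> Nin" unfolding Nin_def using ab0 by (intro set_int_nonneg) auto
          have "Nin = (LBINT r:{a..b}. r ^ (d - 1) * exp (2 * s * m r) * (phi r)\<^sup>2)"
            unfolding Nin_def by (rule set_lebesgue_integral_cong) (use H1_zero in auto)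
          also have "\<dots> \<le> (LBINT r:{0..1}. r ^ (d - 1) * exp (2 * s * m r) * (phi r)\<^sup>2)"
            using ab0 by (intro set_int_subset_le[OF i1]) auto
          finally have Nin1: "Nin \<le> 1" using n1 by simp
          have X: "R * S \<le> \<epsilon> / 2"
          proof -
            have "R * S \<le> R * \<eta>" using S R0 by (intro mult_left_mono) auto
            also have "\<dots> = \<epsilon> / 2" unfolding \<eta>_def using R0 by simp
            finally show ?thesis .
          qed
          have th: "2 * \<theta> * LD \<le> \<epsilon> / 2"
          proof -
            have "2 * \<theta> * LD = \<epsilon> / 2 * (LD / (LD + 1))" unfolding \<theta>_def using LD0 by (simp add: field_simps)
            also have "\<dots> \<le> \<epsilon> / 2 * 1" using LD0 \<epsilon> by (intro mult_left_mono) auto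
            finally show ?thesis by simp
          qed
          show ?thesis
            by (rule final_arith[OF LD0 Nin0 Nin1 \<theta>0 OS IB _ X th]) (use R0 S00 in simp)
        qed
      qed
    qed
  qed
  show ?thesis
    unfolding LD_def[symmetric]
  proof (rule order_tendstoI)
    fix y assume y: "y < LD"
    obtain S where S: "\<forall>s\<ge>S. LD - (LD - y) / 2 \<le> lambda_s d m c s"
      using lower[of "(LD - y) / 2"] y by auto
    show "\<forall>\<^sub>F s in at_top. y < lambda_s d m c s"
      unfolding eventually_at_top_linorder
    proof (intro exI[of _ S] allI impI)
      fix s assume "S \<le> s"
      then have l1: "LD - (LD - y) / 2 \<le> lambda_s d m c s" using S by blast
      have l2: "y < LD - (LD - y) / 2" using y by (simp add: field_simps)
      show "y < lambda_s d m c s" by (rule less_le_trans[OF l2 l1])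
    qed
  next
    fix y assume y: "LD < y"
    show "\<forall>\<^sub>F s in at_top. lambda_s d m c s < y"
      using upper y by (intro always_eventually) (auto intro: le_less_trans)
  qed
qed


end
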